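(* Let $p,q\in\mathbb{R}$ with $p\neq0$, $q\neq0$, and let $j\in\mathbb{R}$ with $j\neq n$. If $M,N\in\mathcal{K}_o^n$ and $Q\in\mathcal{S}_o^n$, then $$\lim_{t\rightarrow0}\frac{\widetilde{W}_{q,j}(M+_pt\cdot N,Q)-\widetilde{W}_{q,j}(M,Q)}{t}=\frac{q}{p}\int_{S^{n-1}}h_N^p(v)\,d\widetilde{\mathcal{C}}_{p,q,j}(M,Q,v).$$
   Context: $\mathcal{K}_o^n$ denotes the set of convex bodies (compact convex sets with nonempty interior) in $\mathbb{R}^n$ containing the origin in their interiors; $\mathcal{S}_o^n$ denotes the set of compact sets star-shaped about the origin whose radial function $\rho_Q(x)=\max\{\lambda\ge0:\lambda x\in Q\}$ is positive and continuous on $\mathbb{R}^n\setminus\{0\}$. $h_M(x)=\max\{x\cdot y:y\in M\}$ is the support function, and $du$ is spherical Lebesgue measure on $S^{n-1}$. For $q\in\mathbb{R}$, $j\ne n$, $M\in\mathcal{K}_o^n$, $Q\in\mathcal{S}_o^n$, the $q$-th dual mixed quermassintegral is $\widetilde{W}_{q,j}(M,Q)=\frac1n\int_{S^{n-1}}\rho_M^q(u)\rho_Q^{n-q-j}(u)\,du$. For $M\in\mathcal{K}_o^n$, let $\partial'M$ be the set of boundary points of $M$ with a unique outer unit normal $\nu_M(x)$; the radial Gauss map $\alpha_M(u)=\nu_M(\rho_M(u)u)$ is defined for almost all $u\in S^{n-1}$. For a Borel set $\eta\subseteq S^{n-1}$ the reverse radial Gauss image is $R^*_M(\eta)=\{u\in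 S^{n-1}:\rho_M(u)u\cdot v=h_M(v)\text{ for some }v\in\eta\}$. The $q$-th dual mixed curvature measure is $\widetilde{\mathcal{C}}_{q,j}(M,Q,\eta)=\frac1n\int_{R^*_M(\eta)}\rho_M^q(u)\rho_Q^{n-q-j}(u)\,du$, and for $p\in\mathbb{R}$ the $(p,q)$-dual mixed curvature measure $\widetilde{\mathcal{C}}_{p,q,j}(M,Q,\cdot)$ is the measure with $d\widetilde{\mathcal{C}}_{p,q,j}(M,Q,\cdot)=h_M^{-p}\,d\widetilde{\mathcal{C}}_{q,j}(M,Q,\cdot)$. For $p\ne0$ and $t$ such that $h_M^p+t h_N^p>0$ on $S^{n-1}$, $M+_pt\cdot N$ is the Wulff shape $\{x\in\mathbb{R}^n: x\cdot v\le (h_M^p(v)+th_N^p(v))^{1/p}\ \forall v\in S^{n-1}\}$. *)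

theory Defs
  imports "HOL-Analysis.Analysis"
begin

definition support_fun :: "'a::euclidean_space set \<Rightarrow> 'a \<Rightarrow> real" where
  "support_fun M x = Sup {x \<bullet> y | y. y \<in> M}"

definition radial_fun :: "'a::euclidean_space set \<Rightarrow> 'a \<Rightarrow> real" where
  "radial_fun Q x = Sup {l. l \<ge> 0 \<and> l *\<^sub>R x \<in> Q}"

definition convex_body_o :: "'a::euclidean_space set \<Rightarrow> bool" where
  "convex_body_o M \<longleftrightarrow> compact M \<and> convex M \<and> interior M \<noteq> {} \<and> 0 \<in> interior M"

definition star_body_o :: "'a::euclidean_space set \<Rightarrow> bool" where
  "star_body_o Q \<longleftrightarrow> compact Q \<and> (\<forall>x\<in>Q. \<forall>t\<in>{0..1}. t *\<^sub>R x \<in> Q)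
     \<and> (\<forall>x. x \<noteq> 0 \<longrightarrow> radial_fun Q x > 0)
     \<and> continuous_on (UNIV - {0}) (radial_fun Q)"

text \<open>Spherical Lebesgue measure on S^{n-1}: sigma(E) = n * vol({r u : 0 < r <= 1, u in E}),
  realised as the push-forward of n times Lebesgue measure on the punctured unit ball
  under radial projection.\<close>
definition sphere_measure :: "'a::euclidean_space measure" where
  "sphere_measure = distr (scale_measure (ennreal (real DIM('a)))
       (restrict_space lborel (ball 0 1 - {0})))
     (restrict_space borel (sphere 0 1)) (\<lambda>x. x /\<^sub>R norm x)"

definition dual_mixed_quermass :: "real \<Rightarrow> real \<Rightarrow> 'a::euclidean_space set \<Rightarrow> 'a set \<Rightarrow> real" where
  "dual_mixed_quermass q j M Q =
     (1 / real DIM('a)) * (\<integral>u. radial_fun M u powr q * radial_fun Q u powr (real DIM('a) - q - j)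
        \<partial>(sphere_measure :: 'a measure))"

definition reverse_radial_gauss :: "'a::euclidean_space set \<Rightarrow> 'a set \<Rightarrow> 'a set" where
  "reverse_radial_gauss M \<eta> =
     {u \<in> sphere 0 1. \<exists>v\<in>\<eta>. (radial_fun M u *\<^sub>R u) \<bullet> v = support_fun M v}"

definition dual_mixed_curv :: "real \<Rightarrow> real \<Rightarrow> 'a::euclidean_space set \<Rightarrow> 'a set \<Rightarrow> 'a measure" where
  "dual_mixed_curv q j M Q =
     measure_of (sphere 0 1) (sets (restrict_space borel (sphere 0 (1::real))))
       (\<lambda>\<eta>. \<integral>\<^sup>+ u. indicator (reverse_radial_gauss M \<eta>) u *
           ennreal ((1 / real DIM('a)) * (radial_fun M u powr q * radial_fun Q u powr (real DIM('a) - q - j)))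
         \<partial>(sphere_measure :: 'a measure))"

definition pq_dual_mixed_curv :: "real \<Rightarrow> real \<Rightarrow> real \<Rightarrow> 'a::euclidean_space set \<Rightarrow> 'a set \<Rightarrow> 'a measure" where
  "pq_dual_mixed_curv p q j M Q =
     density (dual_mixed_curv q j M Q) (\<lambda>v. ennreal (support_fun M v powr (- p)))"

definition Lp_comb :: "real \<Rightarrow> 'a::euclidean_space set \<Rightarrow> real \<Rightarrow> 'a set \<Rightarrow> 'a set" where
  "Lp_comb p M t N = {x. \<forall>v\<in>sphere 0 1.
      x \<bullet> v \<le> (support_fun M v powr p + t * support_fun N v powr p) powr (1 / p)}"

end

theory Submission
  imports Defs
begin

definition wulff :: "('a::euclidean_space \<Rightarrow> real) \<Rightarrow> 'a set" where
  "wulff f = {x. \<forall>v\<in>sphere 0 1. x \<bullet> v \<le> f v}"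

definition gaugef :: "('a::euclidean_space \<Rightarrow> real) \<Rightarrow> 'a \<Rightarrow> real" where
  "gaugef f x = Sup ((\<lambda>v. x \<bullet> v / f v) ` sphere 0 1)"

lemma sphere_nonempty: "sphere (0::'a::euclidean_space) 1 \<noteq> {}"
proof -
  obtain b :: 'a where "b \<in> Basis" using nonempty_Basis by blast
  then have "b \<in> sphere 0 1" by simp
  then show ?thesis by blast
qed

lemma gauge_max:
  fixes f :: "'a::euclidean_space \<Rightarrow> real"
  assumes fc: "continuous_on (sphere 0 1) f" and fp: "\<And>v. v \<in> sphere 0 1 \<Longrightarrow> f v > 0"
  shows "\<exists>v\<in>sphere 0 1. gaugef f x = x \<bullet> v / f v"
    and "\<And>v. v \<in> sphere 0 1 \<Longrightarrow> x \<bullet> v / f v \<le> gaugef f x"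
proof -
  have nz: "\<forall>v\<in>sphere 0 1. f v \<noteq> 0" using fp by (metis less_irrefl)
  have c: "continuous_on (sphere 0 1) (\<lambda>v. x \<bullet> v / f v)"
    using nz by (intro continuous_intros fc) auto
  obtain v0 where v0: "v0 \<in> sphere 0 1" "\<And>v. v \<in> sphere 0 1 \<Longrightarrow> x \<bullet> v / f v \<le> x \<bullet> v0 / f v0"
    using continuous_attains_sup[OF compact_sphere sphere_nonempty c] by blast
  have g: "gaugef f x = x \<bullet> v0 / f v0"
    unfolding gaugef_def by (rule cSup_eq_maximum) (use v0 in auto)
  show "\<exists>v\<in>sphere 0 1. gaugef f x = x \<bullet> v / f v" using g v0 by blast
  show "\<And>v. v \<in> sphere 0 1 \<Longrightarrow> x \<bullet> v / f v \<le> gaugef f x" using g v0 by simp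
qed

lemma gauge_pos:
  fixes f :: "'a::euclidean_space \<Rightarrow> real"
  assumes fc: "continuous_on (sphere 0 1) f" and fp: "\<And>v. v \<in> sphere 0 1 \<Longrightarrow> f v > 0"
    and u: "u \<in> sphere 0 1"
  shows "gaugef f u \<ge> 1 / f u" "gaugef f u > 0"
proof -
  have "u \<bullet> u / f u \<le> gaugef f u" using gauge_max(2)[OF fc fp u] .
  moreover have "u \<bullet> u = 1" using u by (simp add: dot_square_norm)
  ultimately show "gaugef f u \<ge> 1 / f u" by simp
  moreover have "1 / f u > 0" using fp[OF u] by simp
  ultimately show "gaugef f u > 0" by linarith
qed

lemma radial_wulff:
  fixes f :: "'a::euclidean_space \<Rightarrow> real"
  assumes fc: "continuous_on (sphere 0 1) f" and fp: "\<And>v. v \<in> sphere 0 1 \<Longrightarrow> f v > 0"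
    and u: "u \<in> sphere 0 1"
  shows "radial_fun (wulff f) u = 1 / gaugef f u"
proof -
  define G where "G = gaugef f u"
  have G0: "G > 0" unfolding G_def using gauge_pos[OF fc fp u] by simp
  obtain v0 where v0: "v0 \<in> sphere 0 1" "G = u \<bullet> v0 / f v0"
    using gauge_max(1)[OF fc fp] unfolding G_def by blast
  have le: "\<And>v. v \<in> sphere 0 1 \<Longrightarrow> u \<bullet> v / f v \<le> G" using gauge_max(2)[OF fc fp] unfolding G_def by blast
  have "{l. l \<ge> 0 \<and> l *\<^sub>R u \<in> wulff f} = {0..1/G}"
  proof (intro set_eqI iffI)
    fix l assume "l \<in> {l. l \<ge> 0 \<and> l *\<^sub>R u \<in> wulff f}"
    then have l: "l \<ge> 0" "l * (u \<bullet> v0) \<le> f v0" using v0 by (auto simp: wulff_def)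
    have fv0: "f v0 > 0" using fp v0 by auto
    have e: "l * G * f v0 = l * (u \<bullet> v0)" using v0(2) fv0 by (simp add: field_simps)
    have "l * G * f v0 \<le> 1 * f v0" using e l(2) by (simp only: mult_1)
    then have "l * G \<le> 1" using fv0 by (rule mult_right_le_imp_le)
    then show "l \<in> {0..1/G}" using l G0 by (simp add: field_simps)
  next
    fix l assume l: "l \<in> {0..1/G}"
    have "l *\<^sub>R u \<in> wulff f"
      unfolding wulff_def
    proof (intro CollectI ballI)
      fix v assume v: "v \<in> sphere (0::'a) 1"
      have fv: "f v > 0" using fp v by auto
      have "l * (u \<bullet> v / f v) \<le> l * G" using le[OF v] l by (intro mult_left_mono) auto
      also have "\<dots> \<le> 1" using l G0 by (simp add: field_simps)
      finally show "(l *\<^sub>R u) \<bullet> v \<le> f v" using fv by (simp add: field_simps)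
    qed
    then show "l \<in> {l. l \<ge> 0 \<and> l *\<^sub>R u \<in> wulff f}" using l by auto
  qed
  then show ?thesis unfolding radial_fun_def G_def[symmetric] using G0 by simp
qed

lemma gauge_lipschitz:
  fixes f :: "'a::euclidean_space \<Rightarrow> real"
  assumes fc: "continuous_on (sphere 0 1) f" and fp: "\<And>v. v \<in> sphere 0 1 \<Longrightarrow> f v \<ge> r" and r: "r > 0"
  shows "gaugef f x \<le> gaugef f y + norm (x - y) / r"
proof -
  have fp': "\<And>v. v \<in> sphere 0 1 \<Longrightarrow> f v > 0" using fp r by (meson less_le_trans)
  obtain v where v: "v \<in> sphere 0 1" "gaugef f x = x \<bullet> v / f v" using gauge_max(1)[OF fc fp'] by blast
  have "x \<bullet> v / f v = y \<bullet> v / f v + (x - y) \<bullet> v / f v" by (simp add: inner_diff_left diff_divide_distrib)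
  also have "(x - y) \<bullet> v / f v \<le> norm (x - y) / r"
  proof -
    have "(x - y) \<bullet> v \<le> norm (x - y)" using norm_cauchy_schwarz[of "x - y" v] v by simp
    have "\<bar>(x - y) \<bullet> v\<bar> \<le> norm (x - y)" using Cauchy_Schwarz_ineq2[of "x - y" v] v by simp
    then have "(x - y) \<bullet> v / f v \<le> norm (x - y) / f v" using fp'[OF v(1)] by (simp add: divide_right_mono)
    also have "\<dots> \<le> norm (x - y) / r" using fp[OF v(1)] r by (simp add: frac_le)
    finally show ?thesis .
  qed
  finally have "x \<bullet> v / f v \<le> y \<bullet> v / f v + norm (x - y) / r" by simp
  moreover have "y \<bullet> v / f v \<le> gaugef f y" using gauge_max(2)[OF fc fp' v(1)] .
  ultimately show ?thesis using v by linarith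
qed

lemma gauge_continuous:
  fixes f :: "'a::euclidean_space \<Rightarrow> real"
  assumes fc: "continuous_on (sphere 0 1) f" and fp: "\<And>v. v \<in> sphere 0 1 \<Longrightarrow> f v \<ge> r" and r: "r > 0"
  shows "continuous_on A (gaugef f)"
proof -
  have "\<bar>gaugef f x - gaugef f y\<bar> \<le> norm (x - y) / r" for x y
    using gauge_lipschitz[OF fc fp r, of x y] gauge_lipschitz[OF fc fp r, of y x]
    by (simp add: norm_minus_commute)
  then have "(1/r)-lipschitz_on A (gaugef f)"
    by (intro lipschitz_onI) (auto simp: dist_norm dist_real_def less_imp_le[OF r])
  then show ?thesis by (rule lipschitz_on_continuous_on)
qed

lemma cb_bounds:
  fixes M :: "'a::euclidean_space set"
  assumes "convex_body_o M"
  shows "\<exists>r R. 0 < r \<and> cball 0 r \<subseteq> M \<and> M \<subseteq> cball 0 R"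
proof -
  from assms have "0 \<in> interior M" "compact M" by (auto simp: convex_body_o_def)
  then obtain e where e: "e > 0" "ball 0 e \<subseteq> M" using mem_interior by blast
  have "cball 0 (e/2) \<subseteq> ball 0 e" using e(1) by (simp add: subset_eq)
  then have "cball 0 (e/2) \<subseteq> M" using e(2) by blast
  moreover obtain R where "\<forall>x\<in>M. norm x \<le> R"
    using compact_imp_bounded[OF \<open>compact M\<close>] unfolding bounded_pos by blast
  then have "M \<subseteq> cball 0 R" by auto
  ultimately show ?thesis using e by (intro exI[of _ "e/2"] exI[of _ R]) auto
qed

lemma support_max:
  fixes M :: "'a::euclidean_space set"
  assumes "compact M" "M \<noteq> {}"
  shows "\<exists>y\<in>M. support_fun M x = x \<bullet> y" and "\<And>y. y \<in> M \<Longrightarrow> x \<bullet> y \<le> support_fun M x"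
proof -
  have c: "continuous_on M (\<lambda>y. x \<bullet> y)" by (intro continuous_intros)
  obtain y0 where y0: "y0 \<in> M" "\<And>y. y \<in> M \<Longrightarrow> x \<bullet> y \<le> x \<bullet> y0"
    using continuous_attains_sup[OF assms c] by blast
  have eq: "{x \<bullet> y | y. y \<in> M} = (\<lambda>y. x \<bullet> y) ` M" by auto
  have g: "support_fun M x = x \<bullet> y0"
    unfolding support_fun_def eq by (rule cSup_eq_maximum) (use y0 in auto)
  show "\<exists>y\<in>M. support_fun M x = x \<bullet> y" using g y0 by blast
  show "\<And>y. y \<in> M \<Longrightarrow> x \<bullet> y \<le> support_fun M x" using g y0 by simp
qed

locale cbody =
  fixes M :: "'a::euclidean_space set" and r R :: real
  assumes cb: "convex_body_o M" and r: "0 < r" and inner: "cball 0 r \<subseteq> M" and outer: "M \<subseteq> cball 0 R"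
begin

lemma compact: "compact M" and nonempty: "M \<noteq> {}" and convex: "convex M"
  using cb inner r by (auto simp: convex_body_o_def)

lemma Rpos: "R \<ge> r"
proof -
  obtain b :: 'a where b: "b \<in> Basis" using nonempty_Basis by blast
  then have "r *\<^sub>R b \<in> M" using inner r by auto
  then have "norm (r *\<^sub>R b) \<le> R" using outer by auto
  then show ?thesis using b r by simp
qed

lemma h_max: "\<exists>y\<in>M. support_fun M x = x \<bullet> y" "\<And>y. y \<in> M \<Longrightarrow> x \<bullet> y \<le> support_fun M x"
  using support_max[OF compact nonempty] by blast+

lemma h_lower: "v \<in> sphere 0 1 \<Longrightarrow> support_fun M v \<ge> r"
proof -
  assume v: "v \<in> sphere 0 1"
  then have "r *\<^sub>R v \<in> M" using inner r by auto
  from h_max(2)[OF this, of v] show ?thesis using v by (simp add: dot_square_norm)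
qed

lemma h_upper: "support_fun M x \<le> R * norm x"
proof -
  obtain y where y: "y \<in> M" "support_fun M x = x \<bullet> y" using h_max(1) by blast
  have "x \<bullet> y \<le> norm x * norm y" by (rule norm_cauchy_schwarz)
  also have "\<dots> \<le> norm x * R" using y outer by (intro mult_left_mono) auto
  finally show ?thesis using y by (simp add: mult.commute)
qed

lemma h_lip: "support_fun M x \<le> support_fun M y + R * norm (x - y)"
proof -
  obtain z where z: "z \<in> M" "support_fun M x = x \<bullet> z" using h_max(1) by blast
  have "x \<bullet> z = y \<bullet> z + (x - y) \<bullet> z" by (simp add: inner_diff_left)
  also have "(x - y) \<bullet> z \<le> norm (x - y) * norm z" by (rule norm_cauchy_schwarz)
  also have "\<dots> \<le> norm (x - y) * R" using z outer by (intro mult_left_mono) auto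
  finally show ?thesis using h_max(2)[OF z(1), of y] z by (simp add: mult.commute)
qed

lemma h_cont: "continuous_on A (support_fun M)"
proof -
  have "\<bar>support_fun M x - support_fun M y\<bar> \<le> R * norm (x - y)" for x y
    using h_lip[of x y] h_lip[of y x] by (simp add: norm_minus_commute)
  then have "R-lipschitz_on A (support_fun M)"
    by (intro lipschitz_onI) (use Rpos r in \<open>auto simp: dist_norm dist_real_def\<close>)
  then show ?thesis by (rule lipschitz_on_continuous_on)
qed

lemma h_pos: "v \<in> sphere 0 1 \<Longrightarrow> support_fun M v > 0"
  using h_lower r by (meson less_le_trans)

lemma M_wulff: "M = wulff (support_fun M)"
proof (intro set_eqI iffI)
  fix x assume "x \<in> M"
  then show "x \<in> wulff (support_fun M)" using h_max(2)[of x] by (auto simp: wulff_def inner_commute)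
next
  fix x assume x: "x \<in> wulff (support_fun M)"
  show "x \<in> M"
  proof (rule ccontr)
    assume "x \<notin> M"
    then obtain a b where ab: "a \<bullet> x < b" "\<And>y. y \<in> M \<Longrightarrow> a \<bullet> y > b"
      using separating_hyperplane_closed_point[OF convex compact_imp_closed[OF compact]] by blast
    have "a \<noteq> 0"
    proof
      assume "a = 0"
      then have "0 < b" "b < 0" using ab nonempty by auto
      then show False by simp
    qed
    define v where "v = - (1 / norm a) *\<^sub>R a"
    have v: "v \<in> sphere 0 1" using \<open>a \<noteq> 0\<close> by (simp add: v_def)
    obtain y where y: "y \<in> M" "support_fun M v = v \<bullet> y" using h_max(1) by blast
    have na: "norm a > 0" using \<open>a \<noteq> 0\<close> by simp
    have "v \<bullet> y = - (a \<bullet> y) / norm a" by (simp add: v_def)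
    also have "\<dots> < - b / norm a" using ab(2)[OF y(1)] na by (simp add: divide_strict_right_mono)
    also have "\<dots> < - (a \<bullet> x) / norm a" using ab(1) na by (simp add: divide_strict_right_mono)
    also have "\<dots> = x \<bullet> v" by (simp add: v_def inner_commute)
    finally have "support_fun M v < x \<bullet> v" using y by simp
    moreover have "x \<bullet> v \<le> support_fun M v" using x v unfolding wulff_def by blast
    ultimately show False by linarith
  qed
qed

lemma rho_M: "u \<in> sphere 0 1 \<Longrightarrow> radial_fun M u = 1 / gaugef (support_fun M) u"
  using radial_wulff[OF h_cont h_pos] M_wulff by metis

end

lemma sup_attained:
  fixes g :: "'a::euclidean_space \<Rightarrow> real"
  assumes "compact S" "S \<noteq> {}" "continuous_on S g"
  shows "\<exists>v\<in>S. Sup (g ` S) = g v" "\<And>w. w \<in> S \<Longrightarrow> g w \<le> Sup (g ` S)"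
proof -
  obtain v0 where v0: "v0 \<in> S" "\<And>v. v \<in> S \<Longrightarrow> g v \<le> g v0"
    using continuous_attains_sup[OF assms] by blast
  have e: "Sup (g ` S) = g v0" by (rule cSup_eq_maximum) (use v0 in auto)
  show "\<exists>v\<in>S. Sup (g ` S) = g v" using e v0 by blast
  show "\<And>w. w \<in> S \<Longrightarrow> g w \<le> Sup (g ` S)" using e v0 by auto
qed

lemma tendsto_by_bound:
  fixes f g :: "real \<Rightarrow> real"
  assumes "\<forall>\<^sub>F t in F. \<bar>f t - l\<bar> \<le> g t" "(g \<longlongrightarrow> 0) F"
  shows "(f \<longlongrightarrow> l) F"
proof -
  have "((\<lambda>t. f t - l) \<longlongrightarrow> 0) F"
    by (rule Lim_null_comparison[OF _ assms(2)]) (use assms(1) in simp)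
  then show ?thesis by (rule LIM_zero_cancel)
qed

lemma between_bound:
  fixes A D C t c :: real
  assumes "A \<le> D" "D \<le> C"
  shows "\<bar>D / t - c\<bar> \<le> \<bar>A / t - c\<bar> + \<bar>C / t - c\<bar>"
proof (cases "t \<ge> 0")
  case True
  then have "A / t \<le> D / t" "D / t \<le> C / t" using assms by (auto intro: divide_right_mono)
  then show ?thesis by linarith
next
  case False
  then have "A / t \<ge> D / t" "D / t \<ge> C / t" using assms by (auto intro: divide_right_mono_neg)
  then show ?thesis by linarith
qed

lemma deriv_max_lemma:
  fixes S :: "'a::euclidean_space set" and a k :: "'a \<Rightarrow> real" and L :: "real \<Rightarrow> 'a \<Rightarrow> real"
  assumes S: "compact S" "S \<noteq> {}" and ac: "continuous_on S a" and kc: "continuous_on S k"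
    and v0: "v0 \<in> S" "a v0 > 0" "\<And>v. v \<in> S \<Longrightarrow> v \<noteq> v0 \<Longrightarrow> a v < a v0"
    and t0: "t0 > 0"
    and Lc: "\<And>t. \<bar>t\<bar> \<le> t0 \<Longrightarrow> continuous_on S (L t)"
    and H1: "\<And>t v. \<bar>t\<bar> \<le> t0 \<Longrightarrow> v \<in> S \<Longrightarrow> \<bar>L t v\<bar> \<le> B * \<bar>t\<bar>"
    and H2: "\<And>t v. \<bar>t\<bar> \<le> t0 \<Longrightarrow> t \<noteq> 0 \<Longrightarrow> v \<in> S \<Longrightarrow> \<bar>L t v / t - k v\<bar> \<le> B' * \<bar>t\<bar>"
  shows "((\<lambda>t. (ln (Sup ((\<lambda>v. a v * exp (L t v)) ` S)) - ln (a v0)) / t) \<longlongrightarrow> k v0) (at 0)"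
proof -
  define G where "G = a v0"
  define \<Phi> where "\<Phi> t = Sup ((\<lambda>v. a v * exp (L t v)) ` S)" for t
  have att: "\<exists>v\<in>S. \<Phi> t = a v * exp (L t v)" "\<And>w. w \<in> S \<Longrightarrow> a w * exp (L t w) \<le> \<Phi> t"
    if "\<bar>t\<bar> \<le> t0" for t
  proof -
    have c: "continuous_on S (\<lambda>v. a v * exp (L t v))" by (intro continuous_intros ac Lc that)
    show "\<exists>v\<in>S. \<Phi> t = a v * exp (L t v)" unfolding \<Phi>_def by (rule sup_attained(1)[OF S c])
    show "\<And>w. w \<in> S \<Longrightarrow> a w * exp (L t w) \<le> \<Phi> t" unfolding \<Phi>_def by (rule sup_attained(2)[OF S c])
  qed
  define vt where "vt t = (SOME v. v \<in> S \<and> \<Phi> t = a v * exp (L t v))" for t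
  have vt: "vt t \<in> S" "\<Phi> t = a (vt t) * exp (L t (vt t))" if "\<bar>t\<bar> \<le> t0" for t
    using someI_ex[OF att(1)[OF that, unfolded Bex_def]] unfolding vt_def by blast+
  have amax: "a v \<le> G" if "v \<in> S" for v using v0 that unfolding G_def by (cases "v = v0") force+
  have G0: "G > 0" using v0 by (simp add: G_def)
  have lowb: "G * exp (L t v0) \<le> \<Phi> t" if "\<bar>t\<bar> \<le> t0" for t
    using att(2)[OF that v0(1)] by (simp add: G_def)
  have upb: "\<Phi> t \<le> G * exp (L t (vt t))" if "\<bar>t\<bar> \<le> t0" for t
    using vt[OF that] amax[OF vt(1)[OF that]] by (simp add: mult_right_mono)
  have Phipos: "\<Phi> t > 0" if "\<bar>t\<bar> \<le> t0" for t
    using lowb[OF that] G0 by (meson exp_gt_zero less_le_trans mult_pos_pos)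
  have sandw: "L t v0 \<le> ln (\<Phi> t) - ln G \<and> ln (\<Phi> t) - ln G \<le> L t (vt t)" if "\<bar>t\<bar> \<le> t0" for t
  proof -
    have "ln (G * exp (L t v0)) \<le> ln (\<Phi> t)" using lowb[OF that] G0 Phipos[OF that] by simp
    moreover have "ln (\<Phi> t) \<le> ln (G * exp (L t (vt t)))" using upb[OF that] G0 Phipos[OF that] by simp
    ultimately show ?thesis using G0 by (simp add: ln_mult)
  qed
  have avt: "a (vt t) \<ge> G * exp (- 2 * B * \<bar>t\<bar>)" if "\<bar>t\<bar> \<le> t0" for t
  proof -
    have "G * exp (L t v0) \<le> a (vt t) * exp (L t (vt t))" using lowb[OF that] vt[OF that] by simp
    then have "G * exp (L t v0) * exp (- L t (vt t)) \<le> a (vt t)"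
      by (simp add: mult.assoc exp_minus field_simps)
    moreover have "exp (- 2 * B * \<bar>t\<bar>) \<le> exp (L t v0) * exp (- L t (vt t))"
      using H1[OF that v0(1)] H1[OF that vt(1)[OF that]] by (simp add: exp_add[symmetric])
    ultimately show ?thesis using G0
      by (smt (verit, best) mult_left_mono mult.assoc)
  qed
  have ev_t0: "\<forall>\<^sub>F t in at (0::real). \<bar>t\<bar> \<le> t0"
    using t0 by (auto simp: eventually_at dist_real_def intro!: exI[of _ t0])
  have vt_lim: "(vt \<longlongrightarrow> v0) (at 0)"
  proof (rule tendstoI)
    fix \<epsilon> :: real assume \<epsilon>: "\<epsilon> > 0"
    define K where "K = S \<inter> {v. \<epsilon> \<le> dist v v0}"
    have Kc: "compact K" unfolding K_def
      by (intro compact_Int_closed S closed_Collect_le continuous_intros)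
    show "\<forall>\<^sub>F t in at 0. dist (vt t) v0 < \<epsilon>"
    proof (cases "K = {}")
      case True
      show ?thesis using ev_t0
      proof eventually_elim
        case (elim t) then show ?case using vt(1)[OF elim] True by (force simp: K_def)
      qed
    next
      case False
      obtain w where w: "w \<in> K" "\<And>v. v \<in> K \<Longrightarrow> a v \<le> a w"
        using continuous_attains_sup[OF Kc False continuous_on_subset[OF ac]] by (auto simp: K_def)
      have "w \<noteq> v0" using w \<epsilon> by (auto simp: K_def)
      then have awG: "a w < G" using v0 w by (auto simp: K_def G_def)
      have "((\<lambda>t. G * exp (- 2 * B * \<bar>t\<bar>)) \<longlongrightarrow> G * exp (- 2 * B * \<bar>0\<bar>)) (at (0::real))"
        by (intro tendsto_intros)
      then have "\<forall>\<^sub>F t in at 0. a w < G * exp (- 2 * B * \<bar>t\<bar>)"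
        using awG by (intro order_tendstoD(1)) auto
      with ev_t0 show ?thesis
      proof eventually_elim
        case (elim t)
        then have "a w < a (vt t)" using avt[of t] by linarith
        then have "vt t \<notin> K" using w(2) by force
        then show ?case using vt(1)[OF elim(1)] by (auto simp: K_def)
      qed
    qed
  qed
  have kvt: "((\<lambda>t. k (vt t)) \<longlongrightarrow> k v0) (at 0)"
    by (rule continuous_on_tendsto_compose[OF kc vt_lim v0(1)])
       (use ev_t0 in \<open>eventually_elim, use vt in auto\<close>)
  have ev2: "\<forall>\<^sub>F t in at (0::real). \<bar>t\<bar> \<le> t0 \<and> t \<noteq> 0"
    using t0 by (auto simp: eventually_at dist_real_def intro!: exI[of _ t0])
  have gl: "((\<lambda>t. 2 * B' * \<bar>t\<bar> + \<bar>k (vt t) - k v0\<bar>) \<longlongrightarrow> 2 * B' * \<bar>0\<bar> + \<bar>k v0 - k v0\<bar>) (at 0)"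
    by (intro tendsto_intros kvt)
  show ?thesis
  proof (rule tendsto_by_bound[OF _ gl[simplified]])
    show "\<forall>\<^sub>F t in at 0. \<bar>(ln (Sup ((\<lambda>v. a v * exp (L t v)) ` S)) - ln (a v0)) / t - k v0\<bar>
        \<le> 2 * B' * \<bar>t\<bar> + \<bar>k (vt t) - k v0\<bar>"
      using ev2
    proof eventually_elim
      case (elim t)
      then have tt: "\<bar>t\<bar> \<le> t0" "t \<noteq> 0" by auto
      have b1: "\<bar>L t v0 / t - k v0\<bar> \<le> B' * \<bar>t\<bar>" using H2[OF tt v0(1)] .
      have b2: "\<bar>L t (vt t) / t - k v0\<bar> \<le> B' * \<bar>t\<bar> + \<bar>k (vt t) - k v0\<bar>"
        using H2[OF tt vt(1)[OF tt(1)]] by linarith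
      have "\<bar>(ln (\<Phi> t) - ln G) / t - k v0\<bar> \<le> \<bar>L t v0 / t - k v0\<bar> + \<bar>L t (vt t) / t - k v0\<bar>"
        by (rule between_bound) (use sandw[OF tt(1)] in auto)
      then show ?case using b1 b2 unfolding \<Phi>_def G_def by linarith
    qed
  qed
qed


lemma bound_max_lemma:
  fixes S :: "'a::euclidean_space set" and a :: "'a \<Rightarrow> real" and L :: "'a \<Rightarrow> real"
  assumes S: "compact S" "S \<noteq> {}" and ac: "continuous_on S a" and Lc: "continuous_on S L"
    and G0: "Sup (a ` S) > 0"
    and H1: "\<And>v. v \<in> S \<Longrightarrow> \<bar>L v\<bar> \<le> b"
  shows "Sup ((\<lambda>v. a v * exp (L v)) ` S) > 0"
    and "\<bar>ln (Sup ((\<lambda>v. a v * exp (L v)) ` S)) - ln (Sup (a ` S))\<bar> \<le> b"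
proof -
  define G where "G = Sup (a ` S)"
  define \<Phi> where "\<Phi> = Sup ((\<lambda>v. a v * exp (L v)) ` S)"
  have c: "continuous_on S (\<lambda>v. a v * exp (L v))" by (intro continuous_intros ac Lc)
  obtain v0 where v0: "v0 \<in> S" "G = a v0" using sup_attained(1)[OF S ac] unfolding G_def by blast
  have amax: "\<And>v. v \<in> S \<Longrightarrow> a v \<le> G" using sup_attained(2)[OF S ac] unfolding G_def by blast
  obtain v1 where v1: "v1 \<in> S" "\<Phi> = a v1 * exp (L v1)" using sup_attained(1)[OF S c] unfolding \<Phi>_def by blast
  have low: "a v0 * exp (L v0) \<le> \<Phi>" using sup_attained(2)[OF S c v0(1)] unfolding \<Phi>_def .
  have Gp: "G > 0" using G0 by (simp add: G_def)
  have "G * exp (- b) \<le> G * exp (L v0)" using H1[OF v0(1)] Gp by auto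
  then have lowb: "G * exp (- b) \<le> \<Phi>" using low v0 by simp
  have upb: "\<Phi> \<le> G * exp b"
  proof (cases "a v1 \<ge> 0")
    case True
    have "a v1 * exp (L v1) \<le> G * exp (L v1)" using amax[OF v1(1)] by (simp add: mult_right_mono)
    also have "\<dots> \<le> G * exp b" using H1[OF v1(1)] Gp by auto
    finally show ?thesis using v1 by simp
  next
    case False
    then have "a v1 * exp (L v1) < 0" by (simp add: mult_neg_pos)
    also have "0 < G * exp b" using Gp by simp
    finally show ?thesis using v1 by simp
  qed
  have Pp: "\<Phi> > 0" using lowb Gp by (meson exp_gt_zero less_le_trans mult_pos_pos)
  then show "Sup ((\<lambda>v. a v * exp (L v)) ` S) > 0" by (simp add: \<Phi>_def)
  have "ln (G * exp (- b)) \<le> ln \<Phi>" using lowb Gp Pp by simp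
  moreover have "ln \<Phi> \<le> ln (G * exp b)" using upb Gp Pp by simp
  ultimately have "\<bar>ln \<Phi> - ln G\<bar> \<le> b" using Gp by (simp add: ln_mult)
  then show "\<bar>ln (Sup ((\<lambda>v. a v * exp (L v)) ` S)) - ln (Sup (a ` S))\<bar> \<le> b"
    by (simp add: \<Phi>_def G_def)
qed

lemma dct_at0:
  fixes s :: "real \<Rightarrow> 'x \<Rightarrow> real"
  assumes f: "f \<in> borel_measurable M" and w: "integrable M w"
    and ev: "\<forall>\<^sub>F t in at 0. s t \<in> borel_measurable M \<and> (AE x in M. \<bar>s t x\<bar> \<le> w x)"
    and lim: "AE x in M. ((\<lambda>t. s t x) \<longlongrightarrow> f x) (at 0)"
  shows "((\<lambda>t. integral\<^sup>L M (s t)) \<longlongrightarrow> integral\<^sup>L M f) (at 0)"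
proof (subst tendsto_at_iff_sequentially, intro allI impI)
  fix X :: "nat \<Rightarrow> real" assume X1: "\<forall>i. X i \<in> UNIV - {0}" and X2: "X \<longlonglongrightarrow> 0"
  then have Xf: "filterlim X (at 0) sequentially" by (auto simp: filterlim_at)
  from filterlim_iff[THEN iffD1, OF Xf, rule_format, OF ev]
  obtain N where N: "\<And>n. N \<le> n \<Longrightarrow> s (X n) \<in> borel_measurable M \<and> (AE x in M. \<bar>s (X n) x\<bar> \<le> w x)"
    by (auto simp: eventually_sequentially)
  have "(\<lambda>n. integral\<^sup>L M (s (X (n + N)))) \<longlonglongrightarrow> integral\<^sup>L M f"
  proof (rule integral_dominated_convergence[OF f _ w])
    show "\<And>n. s (X (n + N)) \<in> borel_measurable M" using N by simp
    show "AE x in M. norm (s (X (n + N)) x) \<le> w x" for n using N[of "n + N"] by simp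
    show "AE x in M. (\<lambda>n. s (X (n + N)) x) \<longlonglongrightarrow> f x"
      using lim
    proof eventually_elim
      case (elim x)
      then have "(\<lambda>n. s (X n) x) \<longlonglongrightarrow> f x" by (rule filterlim_compose[OF _ Xf])
      then show ?case by (rule LIMSEQ_ignore_initial_segment)
    qed
  qed
  then show "((\<lambda>t. integral\<^sup>L M (s t)) \<circ> X) \<longlonglongrightarrow> integral\<^sup>L M f"
    unfolding comp_def by (rule LIMSEQ_offset)
qed

locale setting = cM: cbody M r R + cN: cbody N rN RN
  for M :: "'a::euclidean_space set" and r R and N :: "'a set" and rN RN +
  fixes p :: real
  assumes p: "p \<noteq> 0"
begin

abbreviation "S \<equiv> sphere (0::'a) 1"
abbreviation "h \<equiv> support_fun M"
abbreviation "hN \<equiv> support_fun N"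

definition kf :: "'a \<Rightarrow> real" where "kf v = hN v powr p / h v powr p"
definition Lf :: "real \<Rightarrow> 'a \<Rightarrow> real" where "Lf t v = - (1 / p) * ln (1 + t * kf v)"
definition ft :: "real \<Rightarrow> 'a \<Rightarrow> real" where "ft t v = (h v powr p + t * hN v powr p) powr (1 / p)"
definition au :: "'a \<Rightarrow> 'a \<Rightarrow> real" where "au u v = u \<bullet> v / h v"

lemma kf_pos: "v \<in> S \<Longrightarrow> kf v > 0"
proof -
  assume v: "v \<in> S"
  have "h v > 0" "hN v > 0" using cM.h_pos[OF v] cN.h_pos[OF v] by auto
  then show ?thesis by (simp add: kf_def)
qed

lemma kf_cont: "continuous_on S kf"
  unfolding kf_def
  by (intro continuous_intros continuous_on_powr cM.h_cont cN.h_cont)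
     (auto dest: cM.h_pos cN.h_pos simp: less_imp_neq[symmetric])

lemma K_ex: "\<exists>K>0. \<forall>v\<in>S. kf v \<le> K"
proof -
  have "bounded (kf ` S)" by (intro compact_imp_bounded compact_continuous_image kf_cont compact_sphere)
  then obtain K where "K > 0" "\<forall>x\<in>kf ` S. norm x \<le> K" unfolding bounded_pos by blast
  then show ?thesis by (intro exI[of _ K]) auto
qed

definition K where "K = (SOME K. K > 0 \<and> (\<forall>v\<in>S. kf v \<le> K))"
lemma K: "K > 0" "v \<in> S \<Longrightarrow> kf v \<le> K"
  using someI_ex[OF K_ex[unfolded Bex_def]] unfolding K_def by auto

definition t0 where "t0 = 1 / (2 * K)"
lemma t0: "t0 > 0" using K by (simp add: t0_def)

lemma tk_small: "\<bar>t\<bar> \<le> t0 \<Longrightarrow> v \<in> S \<Longrightarrow> \<bar>t * kf v\<bar> \<le> 1/2"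
proof -
  assume t: "\<bar>t\<bar> \<le> t0" and v: "v \<in> S"
  have "\<bar>t * kf v\<bar> = \<bar>t\<bar> * kf v" using kf_pos[OF v] by (simp add: abs_mult)
  also have "\<dots> \<le> t0 * K" using t K(2)[OF v] kf_pos[OF v] by (intro mult_mono) auto
  also have "\<dots> = 1/2" using K by (simp add: t0_def)
  finally show ?thesis .
qed

lemma onep: "\<bar>t\<bar> \<le> t0 \<Longrightarrow> v \<in> S \<Longrightarrow> 1 + t * kf v > 0"
proof -
  assume "\<bar>t\<bar> \<le> t0" "v \<in> S"
  then have "\<bar>t * kf v\<bar> \<le> 1/2" by (rule tk_small)
  then show ?thesis by (simp add: abs_le_iff)
qed

lemma ln_bound: "\<bar>x::real\<bar> \<le> 1/2 \<Longrightarrow> \<bar>ln (1 + x)\<bar> \<le> 2 * \<bar>x\<bar>"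
proof -
  assume x: "\<bar>x\<bar> \<le> 1/2"
  have "\<bar>ln (1 + x) - x\<bar> \<le> 2 * x\<^sup>2" by (rule abs_ln_one_plus_x_minus_x_bound[OF x])
  moreover have "2 * x\<^sup>2 \<le> \<bar>x\<bar>"
  proof -
    have "2 * x\<^sup>2 = (2 * \<bar>x\<bar>) * \<bar>x\<bar>" by (simp add: power2_eq_square abs_mult_self_eq)
    also have "\<dots> \<le> 1 * \<bar>x\<bar>" using x by (intro mult_right_mono) auto
    finally show ?thesis by simp
  qed
  ultimately show ?thesis by linarith
qed

definition B1 where "B1 = 2 * K / \<bar>p\<bar>"
definition B2 where "B2 = 2 * K\<^sup>2 / \<bar>p\<bar>"

lemma Lf_bound: "\<bar>t\<bar> \<le> t0 \<Longrightarrow> v \<in> S \<Longrightarrow> \<bar>Lf t v\<bar> \<le> B1 * \<bar>t\<bar>"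
proof -
  assume t: "\<bar>t\<bar> \<le> t0" and v: "v \<in> S"
  have "\<bar>Lf t v\<bar> = \<bar>ln (1 + t * kf v)\<bar> / \<bar>p\<bar>" by (simp add: Lf_def abs_mult)
  also have "\<dots> \<le> (2 * \<bar>t * kf v\<bar>) / \<bar>p\<bar>"
    using ln_bound[OF tk_small[OF t v]] p by (simp add: divide_right_mono)
  also have "\<dots> \<le> (2 * (\<bar>t\<bar> * K)) / \<bar>p\<bar>"
    using K(2)[OF v] kf_pos[OF v] p by (intro divide_right_mono mult_left_mono) (auto simp: abs_mult intro: mult_left_mono)
  also have "\<dots> = B1 * \<bar>t\<bar>" by (simp add: B1_def)
  finally show ?thesis .
qed

lemma Lf_deriv_bound:
  "\<bar>t\<bar> \<le> t0 \<Longrightarrow> t \<noteq> 0 \<Longrightarrow> v \<in> S \<Longrightarrow> \<bar>Lf t v / t - (- kf v / p)\<bar> \<le> B2 * \<bar>t\<bar>"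
proof -
  assume t: "\<bar>t\<bar> \<le> t0" and t0': "t \<noteq> 0" and v: "v \<in> S"
  have "Lf t v / t - (- kf v / p) = - (ln (1 + t * kf v) - t * kf v) / (p * t)"
    using t0' p by (simp add: Lf_def field_simps)
  then have "\<bar>Lf t v / t - (- kf v / p)\<bar> = \<bar>ln (1 + t * kf v) - t * kf v\<bar> / (\<bar>p\<bar> * \<bar>t\<bar>)"
    by (simp add: abs_mult abs_minus_commute)
  also have "\<dots> \<le> (2 * (t * kf v)\<^sup>2) / (\<bar>p\<bar> * \<bar>t\<bar>)"
    using abs_ln_one_plus_x_minus_x_bound[OF tk_small[OF t v]] p t0' by (intro divide_right_mono) auto
  also have "\<dots> = 2 * kf v ^ 2 * \<bar>t\<bar> / \<bar>p\<bar>"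
    using t0' p by (simp add: power2_eq_square field_simps abs_mult_self_eq)
  also have "\<dots> \<le> 2 * K ^ 2 * \<bar>t\<bar> / \<bar>p\<bar>"
    using K(2)[OF v] kf_pos[OF v] p by (intro divide_right_mono mult_right_mono mult_left_mono power_mono) auto
  also have "\<dots> = B2 * \<bar>t\<bar>" by (simp add: B2_def)
  finally show ?thesis .
qed

lemma Lf_cont: "\<bar>t\<bar> \<le> t0 \<Longrightarrow> continuous_on S (Lf t)"
  unfolding Lf_def by (intro continuous_intros kf_cont continuous_on_ln) (use onep in force)

lemma Lf0: "Lf 0 v = 0" by (simp add: Lf_def)

lemma ft_eq: "\<bar>t\<bar> \<le> t0 \<Longrightarrow> v \<in> S \<Longrightarrow> ft t v = h v * exp (- Lf t v)"
proof -
  assume t: "\<bar>t\<bar> \<le> t0" and v: "v \<in> S"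
  have hp: "h v > 0" using cM.h_pos[OF v] .
  have hpp: "h v powr p > 0" using hp by simp
  have "h v powr p + t * hN v powr p = h v powr p * (1 + t * kf v)"
    using hpp by (simp add: kf_def field_simps)
  then have "ft t v = (h v powr p) powr (1/p) * (1 + t * kf v) powr (1/p)"
    unfolding ft_def using hpp onep[OF t v] by (simp add: powr_mult)
  also have "(h v powr p) powr (1/p) = h v" using hp p by (simp add: powr_powr)
  also have "(1 + t * kf v) powr (1/p) = exp (- Lf t v)"
    using onep[OF t v] by (simp add: powr_def Lf_def)
  finally show ?thesis .
qed

lemma ft_pos: "\<bar>t\<bar> \<le> t0 \<Longrightarrow> v \<in> S \<Longrightarrow> ft t v > 0"
  using ft_eq cM.h_pos by simp

lemma ft_cont: "\<bar>t\<bar> \<le> t0 \<Longrightarrow> continuous_on S (ft t)"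
proof -
  assume t: "\<bar>t\<bar> \<le> t0"
  have "continuous_on S (\<lambda>v. h v * exp (- Lf t v))"
    by (intro continuous_on_mult continuous_on_exp continuous_on_minus cM.h_cont Lf_cont[OF t])
  then show ?thesis by (rule continuous_on_eq) (simp add: ft_eq[OF t])
qed

lemma ft_lower: "\<bar>t\<bar> \<le> t0 \<Longrightarrow> v \<in> S \<Longrightarrow> ft t v \<ge> r * exp (- (B1 * t0))"
proof -
  assume t: "\<bar>t\<bar> \<le> t0" and v: "v \<in> S"
  have "B1 * \<bar>t\<bar> \<le> B1 * t0" using t K p by (intro mult_left_mono) (auto simp: B1_def)
  then have "exp (- (B1 * t0)) \<le> exp (- Lf t v)" using Lf_bound[OF t v] by simp
  moreover have "r \<le> h v" using cM.h_lower[OF v] .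
  ultimately show ?thesis using ft_eq[OF t v] cM.r by (intro order.trans[OF _ eq_refl[OF ft_eq[OF t v, symmetric]]] mult_mono) auto
qed

lemma Lp_wulff: "Lp_comb p M t N = wulff (ft t)"
  by (simp add: Lp_comb_def wulff_def ft_def)

lemma gauge_ft: "\<bar>t\<bar> \<le> t0 \<Longrightarrow> gaugef (ft t) u = Sup ((\<lambda>v. au u v * exp (Lf t v)) ` S)"
proof -
  assume t: "\<bar>t\<bar> \<le> t0"
  have "u \<bullet> v / ft t v = au u v * exp (Lf t v)" if v: "v \<in> S" for v
  proof -
    have "ft t v = h v / exp (Lf t v)" using ft_eq[OF t v] by (simp add: exp_minus field_simps)
    then show ?thesis by (simp add: au_def)
  qed
  then show ?thesis unfolding gaugef_def by (metis (no_types, lifting) image_cong)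
qed

lemma gauge_h: "gaugef h u = Sup (au u ` S)"
  unfolding gaugef_def au_def by simp

lemma au_cont: "continuous_on S (au u)"
  unfolding au_def by (intro continuous_intros cM.h_cont) (auto dest: cM.h_pos)

lemma rho_t: "\<bar>t\<bar> \<le> t0 \<Longrightarrow> u \<in> S \<Longrightarrow> radial_fun (Lp_comb p M t N) u = 1 / gaugef (ft t) u"
  unfolding Lp_wulff by (rule radial_wulff[OF ft_cont ft_pos])

end

lemma exp_sub_one_bound: "\<bar>exp x - 1\<bar> \<le> \<bar>x\<bar> * exp \<bar>x\<bar>" for x :: real
proof -
  have a: "x \<le> exp x - 1" using exp_ge_add_one_self[of x] by linarith
  have b: "1 - x \<le> exp (- x)" using exp_ge_add_one_self[of "-x"] by linarith
  have "exp x - 1 \<le> x * exp x"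
  proof -
    have "(1 - x) * exp x \<le> exp (- x) * exp x" using b by (intro mult_right_mono) auto
    then show ?thesis by (simp add: exp_minus field_simps)
  qed
  show ?thesis
  proof (cases "x \<ge> 0")
    case True
    then show ?thesis using a \<open>exp x - 1 \<le> x * exp x\<close> by simp
  next
    case False
    have "exp x \<le> 1" using False by simp
    then have "\<bar>exp x - 1\<bar> = 1 - exp x" by simp
    also have "\<dots> \<le> - x" using a by linarith
    also have "\<dots> \<le> \<bar>x\<bar> * exp \<bar>x\<bar>" using False by (simp add: mult_le_cancel_left1)
    finally show ?thesis .
  qed
qed

context setting
begin

definition Gh where "Gh u = gaugef h u"

lemma Gh_pos: "u \<in> S \<Longrightarrow> Gh u > 0"
  unfolding Gh_def by (rule gauge_pos(2)[OF cM.h_cont cM.h_pos])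

lemma rhoM: "u \<in> S \<Longrightarrow> radial_fun M u = 1 / Gh u"
  unfolding Gh_def by (rule cM.rho_M)

definition Phi where "Phi t u = Sup ((\<lambda>v. au u v * exp (Lf t v)) ` S)"

lemma Phi0: "Phi 0 u = Gh u"
  by (simp add: Phi_def Lf0 Gh_def gauge_h)

lemma Phi_eq: "\<bar>t\<bar> \<le> t0 \<Longrightarrow> gaugef (ft t) u = Phi t u"
  unfolding Phi_def by (rule gauge_ft)

lemma Phi_bound:
  assumes t: "\<bar>t\<bar> \<le> t0" and u: "u \<in> S"
  shows "Phi t u > 0" "\<bar>ln (Phi t u) - ln (Gh u)\<bar> \<le> B1 * \<bar>t\<bar>"
proof -
  have G0: "Sup (au u ` S) > 0" using Gh_pos[OF u] by (simp add: Gh_def gauge_h)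
  note bm = bound_max_lemma[OF compact_sphere sphere_nonempty au_cont Lf_cont[OF t] G0 Lf_bound[OF t]]
  show "Phi t u > 0" using bm(1) by (simp add: Phi_def)
  show "\<bar>ln (Phi t u) - ln (Gh u)\<bar> \<le> B1 * \<bar>t\<bar>" using bm(2) by (simp add: Phi_def Gh_def gauge_h)
qed

definition Sm where "Sm = {u \<in> S. \<forall>v\<in>S. \<forall>w\<in>S. au u v = Gh u \<and> au u w = Gh u \<longrightarrow> v = w}"
definition alpha where "alpha u = (SOME v. v \<in> S \<and> au u v = Gh u)"

lemma alpha: "alpha u \<in> S" "au u (alpha u) = Gh u"
proof -
  obtain v where "v \<in> S" "gaugef h u = u \<bullet> v / h v" using gauge_max(1)[OF cM.h_cont cM.h_pos] by blast
  then have ex: "\<exists>v. v \<in> S \<and> au u v = Gh u" by (auto simp: au_def Gh_def)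
  show "alpha u \<in> S" "au u (alpha u) = Gh u" using someI_ex[OF ex] unfolding alpha_def by blast+
qed

lemma au_le: "v \<in> S \<Longrightarrow> au u v \<le> Gh u"
  unfolding au_def Gh_def by (rule gauge_max(2)[OF cM.h_cont cM.h_pos])

lemma alpha_unique: "u \<in> Sm \<Longrightarrow> v \<in> S \<Longrightarrow> v \<noteq> alpha u \<Longrightarrow> au u v < Gh u"
  using au_le[of v u] alpha[of u] unfolding Sm_def by force

lemma D_lim:
  assumes u: "u \<in> Sm"
  shows "((\<lambda>t. (ln (Phi t u) - ln (Gh u)) / t) \<longlongrightarrow> - kf (alpha u) / p) (at 0)"
proof -
  have uS: "u \<in> S" using u by (simp add: Sm_def)
  have kc: "continuous_on S (\<lambda>v. - kf v / p)" by (intro continuous_intros kf_cont) (use p in auto)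
  have "((\<lambda>t. (ln (Sup ((\<lambda>v. au u v * exp (Lf t v)) ` S)) - ln (au u (alpha u))) / t) \<longlongrightarrow> - kf (alpha u) / p) (at 0)"
    by (rule deriv_max_lemma[OF compact_sphere sphere_nonempty au_cont kc alpha(1) _ _ t0 Lf_cont Lf_bound Lf_deriv_bound])
       (use alpha(2) Gh_pos[OF uS] alpha_unique[OF u] in auto)
  then show ?thesis by (simp add: Phi_def alpha(2))
qed

lemma I_eq: "\<bar>t\<bar> \<le> t0 \<Longrightarrow> u \<in> S \<Longrightarrow> radial_fun (Lp_comb p M t N) u powr q = exp (- q * ln (Phi t u))"
proof -
  assume t: "\<bar>t\<bar> \<le> t0" and u: "u \<in> S"
  have "radial_fun (Lp_comb p M t N) u = 1 / Phi t u" using rho_t[OF t u] Phi_eq[OF t] by simp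
  then show ?thesis using Phi_bound(1)[OF t u] by (simp add: powr_def ln_div)
qed

lemma I0_eq: "u \<in> S \<Longrightarrow> radial_fun M u powr q = exp (- q * ln (Gh u))"
proof -
  assume u: "u \<in> S"
  show ?thesis using rhoM[OF u] Gh_pos[OF u] by (simp add: powr_def ln_div)
qed

lemma quot_lim:
  assumes u: "u \<in> Sm"
  shows "((\<lambda>t. (radial_fun (Lp_comb p M t N) u powr q - radial_fun M u powr q) / t)
          \<longlongrightarrow> (q / p) * kf (alpha u) * radial_fun M u powr q) (at 0)"
proof -
  have uS: "u \<in> S" using u by (simp add: Sm_def)
  define D where "D t = ln (Phi t u) - ln (Gh u)" for t
  have D0: "D 0 = 0" by (simp add: D_def Phi0)
  have "(D has_field_derivative - kf (alpha u) / p) (at 0)"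
    unfolding has_field_derivative_iff using D_lim[OF u] by (simp add: D_def Phi0)
  then have "((\<lambda>t. exp (- q * D t)) has_field_derivative exp (- q * D 0) * (- q * (- kf (alpha u) / p))) (at 0)"
    by (intro DERIV_chain'[where g=exp] DERIV_cmult) auto
  then have lim: "((\<lambda>t. (exp (- q * D t) - 1) / t) \<longlongrightarrow> q / p * kf (alpha u)) (at 0)"
    unfolding has_field_derivative_iff by (simp add: D0)
  have lim2: "((\<lambda>t. exp (- q * ln (Gh u)) * ((exp (- q * D t) - 1) / t)) \<longlongrightarrow> exp (- q * ln (Gh u)) * (q / p * kf (alpha u))) (at 0)"
    by (intro tendsto_intros lim)
  have ev: "\<forall>\<^sub>F t in at (0::real). \<bar>t\<bar> \<le> t0"
    using t0 by (auto simp: eventually_at dist_real_def intro!: exI[of _ t0])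
  have ev2: "\<forall>\<^sub>F t in at 0. exp (- q * ln (Gh u)) * ((exp (- q * D t) - 1) / t) =
        (radial_fun (Lp_comb p M t N) u powr q - radial_fun M u powr q) / t"
      using ev
    proof eventually_elim
      case (elim t)
      have "radial_fun (Lp_comb p M t N) u powr q = exp (- q * ln (Gh u)) * exp (- q * D t)"
        unfolding I_eq[OF elim uS] D_def by (simp add: exp_add[symmetric] algebra_simps)
      then show ?case using I0_eq[OF uS] by (simp add: field_simps)
    qed
  have "q / p * kf (alpha u) * radial_fun M u powr q = exp (- q * ln (Gh u)) * (q / p * kf (alpha u))"
    using I0_eq[OF uS] by (simp add: mult_ac)
  then show ?thesis using Lim_transform_eventually[OF lim2 ev2] by (simp only:)
qed

lemma quot_bound:
  assumes t: "\<bar>t\<bar> \<le> t0" "t \<noteq> 0" and u: "u \<in> S"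
  shows "\<bar>(radial_fun (Lp_comb p M t N) u powr q - radial_fun M u powr q) / t\<bar>
         \<le> \<bar>q\<bar> * B1 * exp (\<bar>q\<bar> * B1 * t0) * radial_fun M u powr q"
proof -
  define D where "D = ln (Phi t u) - ln (Gh u)"
  have Db: "\<bar>D\<bar> \<le> B1 * \<bar>t\<bar>" using Phi_bound(2)[OF t(1) u] by (simp add: D_def)
  have B1: "B1 \<ge> 0" using K p by (simp add: B1_def)
  have qD: "\<bar>- q * D\<bar> \<le> \<bar>q\<bar> * (B1 * \<bar>t\<bar>)" using Db by (simp add: abs_mult mult_left_mono)
  have qD2: "\<bar>q\<bar> * (B1 * \<bar>t\<bar>) \<le> \<bar>q\<bar> * B1 * t0" using t(1) B1 by (simp add: mult_left_mono mult.assoc)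
  have eq: "radial_fun (Lp_comb p M t N) u powr q - radial_fun M u powr q = radial_fun M u powr q * (exp (- q * D) - 1)"
    unfolding I_eq[OF t(1) u] I0_eq[OF u] D_def by (simp add: exp_add[symmetric] algebra_simps)
  have "\<bar>exp (- q * D) - 1\<bar> \<le> \<bar>- q * D\<bar> * exp \<bar>- q * D\<bar>" by (rule exp_sub_one_bound)
  also have "\<dots> \<le> (\<bar>q\<bar> * (B1 * \<bar>t\<bar>)) * exp (\<bar>q\<bar> * B1 * t0)"
    using qD qD2 by (intro mult_mono) auto
  finally have e: "\<bar>exp (- q * D) - 1\<bar> / \<bar>t\<bar> \<le> \<bar>q\<bar> * B1 * exp (\<bar>q\<bar> * B1 * t0)"
    using t(2) by (simp add: divide_le_eq mult_ac)
  have "\<bar>(radial_fun (Lp_comb p M t N) u powr q - radial_fun M u powr q) / t\<bar>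
       = radial_fun M u powr q * (\<bar>exp (- q * D) - 1\<bar> / \<bar>t\<bar>)"
    unfolding eq by (simp add: abs_mult)
  also have "\<dots> \<le> radial_fun M u powr q * (\<bar>q\<bar> * B1 * exp (\<bar>q\<bar> * B1 * t0))"
    using e by (intro mult_left_mono) auto
  finally show ?thesis by (simp add: mult_ac)
qed

end

lemma line_no2:
  fixes g :: "'a::euclidean_space \<Rightarrow> real"
  assumes ac: "a < c"
    and P: "P = {x. (\<forall>s\<ge>0. g x + c * s \<le> g (x + s *\<^sub>R b)) \<and> (\<forall>s\<le>0. g x + a * s \<le> g (x + s *\<^sub>R b))}"
    and x: "x \<in> P" and y: "x + s *\<^sub>R b \<in> P"
  shows "s = 0"
proof (rule ccontr)
  assume s: "s \<noteq> 0"
  have key: "False" if x1: "x1 \<in> P" and x2: "x1 + s1 *\<^sub>R b \<in> P" and s1: "s1 > 0" for x1 s1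
  proof -
    have "g x1 + c * s1 \<le> g (x1 + s1 *\<^sub>R b)" using x1 s1 P by auto
    moreover have "g (x1 + s1 *\<^sub>R b) + a * (- s1) \<le> g ((x1 + s1 *\<^sub>R b) + (- s1) *\<^sub>R b)"
    proof -
      have h2: "\<forall>s\<le>0. g (x1 + s1 *\<^sub>R b) + a * s \<le> g (x1 + s1 *\<^sub>R b + s *\<^sub>R b)" using x2 P by blast
      show ?thesis using h2[rule_format, of "- s1"] s1 by simp
    qed
    moreover have "(x1 + s1 *\<^sub>R b) + (- s1) *\<^sub>R b = x1" by (simp add: algebra_simps)
    ultimately have "c * s1 \<le> a * s1" by simp
    then show False using ac s1 by simp
  qed
  show False
  proof (cases "s > 0")
    case True then show False using key[OF x y] by simp
  next
    case False
    then have "- s > 0" using s by simp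
    moreover have "(x + s *\<^sub>R b) + (- s) *\<^sub>R b \<in> P" using x by simp
    ultimately show False using key[OF y] by blast
  qed
qed

lemma line_closed:
  fixes g :: "'a::euclidean_space \<Rightarrow> real"
  assumes gc: "continuous_on UNIV g"
  shows "closed {x. (\<forall>s\<ge>0. g x + c * s \<le> g (x + s *\<^sub>R b)) \<and> (\<forall>s\<le>0. g x + a * s \<le> g (x + s *\<^sub>R b))}"
proof -
  have c1: "continuous_on UNIV (\<lambda>x. g (x + s *\<^sub>R b))" for s
    by (rule continuous_on_compose2[OF gc]) (auto intro!: continuous_intros)
  have eq: "{x. (\<forall>s\<ge>0. g x + c * s \<le> g (x + s *\<^sub>R b)) \<and> (\<forall>s\<le>0. g x + a * s \<le> g (x + s *\<^sub>R b))}
     = (\<Inter>s\<in>{0..}. {x. g x + c * s \<le> g (x + s *\<^sub>R b)}) \<inter> (\<Inter>s\<in>{..0}. {x. g x + a * s \<le> g (x + s *\<^sub>R b)})"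
    by auto
  show ?thesis unfolding eq
    by (intro closed_Int closed_INT ballI closed_Collect_le continuous_intros gc c1)
qed

lemma line_null:
  fixes g :: "'a::euclidean_space \<Rightarrow> real"
  assumes gc: "continuous_on UNIV g" and ac: "a < c" and b: "norm b = 1"
  shows "{x. (\<forall>s\<ge>0. g x + c * s \<le> g (x + s *\<^sub>R b)) \<and> (\<forall>s\<le>0. g x + a * s \<le> g (x + s *\<^sub>R b))} \<inter> cball 0 1
          \<in> null_sets lborel"
proof -
  define P where "P = {x. (\<forall>s\<ge>0. g x + c * s \<le> g (x + s *\<^sub>R b)) \<and> (\<forall>s\<le>0. g x + a * s \<le> g (x + s *\<^sub>R b))}"
  define A where "A = P \<inter> cball 0 1"
  have Ac: "closed A" unfolding A_def P_def by (intro closed_Int line_closed gc closed_cball)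
  then have Am: "A \<in> sets lborel" by simp
  define T where "T m i = (\<lambda>z. (- ((real i / real m) *\<^sub>R b)) + z) -` A" for m i :: nat
  have Tm: "T m i \<in> sets lborel" for m i
  proof -
    have "closed (T m i)" unfolding T_def by (rule continuous_closed_vimage[OF Ac]) (auto intro: continuous_intros)
    then show ?thesis by simp
  qed
  have Tmeas: "emeasure lborel (T m i) = emeasure lborel A" for m i
  proof -
    have "emeasure lborel A = emeasure (distr lborel borel ((+) (- ((real i / real m) *\<^sub>R b)))) A"
      by (simp add: lborel_distr_plus)
    also have "\<dots> = emeasure lborel (T m i)"
    proof (subst emeasure_distr)
      show "A \<in> sets borel" using Am by simp
      have "(+) (- ((real i / real m) *\<^sub>R b)) -` A \<inter> space lborel = T m i"
        unfolding T_def by auto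
      then show "emeasure lborel ((+) (- ((real i / real m) *\<^sub>R b)) -` A \<inter> space lborel) = emeasure lborel (T m i)"
        by simp
    qed simp
    finally show ?thesis by simp
  qed
  have Tsub: "T m i \<subseteq> cball 0 2" if "i < m" for m i
  proof
    fix z assume z: "z \<in> T m i"
    then have "norm (- ((real i / real m) *\<^sub>R b) + z) \<le> 1" by (auto simp: T_def A_def)
    moreover have "norm ((real i / real m) *\<^sub>R b) \<le> 1" using that b by auto
    ultimately have "norm z \<le> 2" using norm_triangle_ineq[of "- ((real i / real m) *\<^sub>R b) + z" "(real i / real m) *\<^sub>R b"]
      by simp
    then show "z \<in> cball 0 2" by simp
  qed
  have disj: "disjoint_family_on (T m) {..<m}" for m
  proof (unfold disjoint_family_on_def, intro ballI impI)
    fix i j assume ij: "i \<in> {..<m}" "j \<in> {..<m}" "i \<noteq> j"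
    show "T m i \<inter> T m j = {}"
    proof (rule ccontr)
      assume "T m i \<inter> T m j \<noteq> {}"
      then obtain z where z: "z \<in> T m i" "z \<in> T m j" by blast
      define x where "x = - ((real i / real m) *\<^sub>R b) + z"
      have x: "x \<in> P" using z(1) by (simp add: T_def A_def x_def)
      have "x + ((real i / real m) - (real j / real m)) *\<^sub>R b = - ((real j / real m) *\<^sub>R b) + z"
        by (simp add: x_def algebra_simps)
      then have y: "x + ((real i / real m) - (real j / real m)) *\<^sub>R b \<in> P" using z(2) by (simp add: T_def A_def)
      have "(real i / real m) - (real j / real m) = 0" by (rule line_no2[OF ac P_def x y])
      moreover have "m > 0" using ij by auto
      ultimately have "real i = real j" by (simp add: field_simps)
      then show False using ij by simp
    qed
  qed
  have fin: "emeasure lborel (cball (0::'a) 2) < \<infinity>" by (rule emeasure_lborel_cball_finite)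
  have bound: "of_nat m * emeasure lborel A \<le> emeasure lborel (cball (0::'a) 2)" for m
  proof -
    have "of_nat m * emeasure lborel A = (\<Sum>i<m. emeasure lborel (T m i))" by (simp add: Tmeas)
    also have "\<dots> = emeasure lborel (\<Union>i<m. T m i)"
      by (rule sum_emeasure) (use Tm disj in auto)
    also have "\<dots> \<le> emeasure lborel (cball (0::'a) 2)"
      by (rule emeasure_mono) (use Tsub in auto)
    finally show ?thesis .
  qed
  have Afin: "emeasure lborel A \<noteq> \<infinity>" using bound[of 1] fin by auto
  define x where "x = measure lborel A"
  define C where "C = measure lborel (cball (0::'a) 2)"
  have ex: "emeasure lborel A = ennreal x" using Afin by (simp add: x_def emeasure_eq_ennreal_measure)
  have eC: "emeasure lborel (cball (0::'a) 2) = ennreal C" using fin by (simp add: C_def emeasure_eq_ennreal_measure)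
  have x0: "x \<ge> 0" "C \<ge> 0" by (simp_all add: x_def C_def)
  have rb: "real m * x \<le> C" for m
  proof -
    have "ennreal (real m * x) \<le> ennreal C"
      using bound[of m] by (simp add: ex eC ennreal_mult x0 ennreal_of_nat_eq_real_of_nat)
    then show ?thesis using x0 by (simp add: ennreal_le_iff)
  qed
  have "x = 0"
  proof (rule ccontr)
    assume "x \<noteq> 0"
    then have xp: "x > 0" using x0 by simp
    obtain m :: nat where m: "C / x < real m" using reals_Archimedean2 by blast
    then have "C < real m * x" using xp by (simp add: field_simps)
    then show False using rb[of m] by simp
  qed
  then have "emeasure lborel A = 0" using ex by simp
  then show ?thesis using Am unfolding A_def P_def by (simp add: null_sets_def)
qed

lemma proj_meas: "(\<lambda>x::'a::euclidean_space. x /\<^sub>R norm x) \<in> borel_measurable borel"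
  by measurable

lemma proj_meas2: "(\<lambda>x::'a::euclidean_space. x /\<^sub>R norm x) \<in> measurable
   (scale_measure (ennreal (real DIM('a))) (restrict_space lborel (ball 0 1 - {0}))) (restrict_space borel (sphere 0 1))"
proof -
  have "(\<lambda>x::'a. x /\<^sub>R norm x) \<in> measurable (restrict_space lborel (ball 0 1 - {0})) (restrict_space borel (sphere 0 1))"
    by (rule measurable_restrict_space2)
       (auto intro!: measurable_restrict_space1 simp: measurable_lborel1 proj_meas)
  then show ?thesis by (simp add: measurable_cong_sets[OF sets_scale_measure refl])
qed

lemma space_sm: "space (sphere_measure :: 'a::euclidean_space measure) = sphere 0 1"
  by (simp add: sphere_measure_def space_restrict_space)

lemma sets_sm: "sets (sphere_measure :: 'a::euclidean_space measure) = sets (restrict_space borel (sphere 0 1))"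
  by (simp add: sphere_measure_def)

lemma meas_sm: "continuous_on (sphere 0 1) f \<Longrightarrow> f \<in> borel_measurable (sphere_measure :: 'a::euclidean_space measure)"
  by (simp add: measurable_cong_sets[OF sets_sm refl] borel_measurable_continuous_on_restrict)

lemma emeasure_sm:
  assumes A: "A \<in> sets borel" "A \<subseteq> sphere 0 1"
  shows "emeasure (sphere_measure :: 'a::euclidean_space measure) A =
     ennreal (real DIM('a)) * emeasure lborel ((\<lambda>x::'a. x /\<^sub>R norm x) -` A \<inter> (ball 0 1 - {0}))"
proof -
  have As: "A \<in> sets (restrict_space borel (sphere (0::'a) 1))"
    using A by (simp add: sets_restrict_space_iff)
  have "emeasure (sphere_measure :: 'a measure) A =
      emeasure (scale_measure (ennreal (real DIM('a))) (restrict_space lborel (ball 0 1 - {0})))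
        ((\<lambda>x::'a. x /\<^sub>R norm x) -` A \<inter> (ball 0 1 - {0}))"
    unfolding sphere_measure_def by (subst emeasure_distr[OF proj_meas2 As]) (simp add: space_restrict_space space_scale_measure)
  also have "\<dots> = ennreal (real DIM('a)) * emeasure lborel ((\<lambda>x::'a. x /\<^sub>R norm x) -` A \<inter> (ball 0 1 - {0}))"
    by (simp add: emeasure_restrict_space)
  finally show ?thesis .
qed

lemma finite_sm: "finite_measure (sphere_measure :: 'a::euclidean_space measure)"
proof (rule finite_measureI)
  have "emeasure (sphere_measure :: 'a measure) (space sphere_measure) =
     ennreal (real DIM('a)) * emeasure lborel ((\<lambda>x::'a. x /\<^sub>R norm x) -` sphere 0 1 \<inter> (ball 0 1 - {0}))"
    unfolding space_sm by (rule emeasure_sm) auto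
  also have "\<dots> \<le> ennreal (real DIM('a)) * emeasure lborel (cball (0::'a) 1)"
    by (intro mult_left_mono emeasure_mono) auto
  also have "\<dots> < \<infinity>" using emeasure_lborel_cball_finite[of "0::'a" 1]
    by (simp add: ennreal_mult_less_top)
  finally show "emeasure (sphere_measure :: 'a measure) (space sphere_measure) \<noteq> \<infinity>" by simp
qed

context setting
begin

lemma Gh_cont: "continuous_on A Gh"
  unfolding Gh_def[abs_def] by (rule gauge_continuous[OF cM.h_cont cM.h_lower cM.r])

lemma au_iff: "v \<in> S \<Longrightarrow> au u v = Gh u \<longleftrightarrow> u \<bullet> v = Gh u * h v"
  using cM.h_pos[of v] by (auto simp: au_def field_simps)

definition Cm :: "nat \<Rightarrow> ('a \<times> 'a \<times> 'a) set" where
  "Cm m = (S \<times> (S \<times> S)) \<inter> {z. 1 / Suc m \<le> dist (fst (snd z)) (snd (snd z))}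
      \<inter> {z. fst z \<bullet> fst (snd z) = Gh (fst z) * h (fst (snd z))}
      \<inter> {z. fst z \<bullet> snd (snd z) = Gh (fst z) * h (snd (snd z))}"

lemma Cm_compact: "compact (Cm m)"
proof -
  have c1: "continuous_on UNIV (\<lambda>z::'a \<times> 'a \<times> 'a. Gh (fst z) * h (fst (snd z)))"
    by (intro continuous_intros continuous_on_compose2[OF Gh_cont] continuous_on_compose2[OF cM.h_cont]) auto
  have c2: "continuous_on UNIV (\<lambda>z::'a \<times> 'a \<times> 'a. Gh (fst z) * h (snd (snd z)))"
    by (intro continuous_intros continuous_on_compose2[OF Gh_cont] continuous_on_compose2[OF cM.h_cont]) auto
  show ?thesis unfolding Cm_def
    by (intro compact_Int_closed compact_Times compact_sphere closed_Collect_le closed_Collect_eq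
          continuous_intros c1 c2)
qed

lemma nonsmooth_eq: "S - Sm = (\<Union>m. fst ` Cm m)"
proof (intro set_eqI iffI)
  fix u assume u: "u \<in> S - Sm"
  then obtain v w where vw: "v \<in> S" "w \<in> S" "au u v = Gh u" "au u w = Gh u" "v \<noteq> w"
    by (auto simp: Sm_def)
  then have "dist v w > 0" by simp
  then obtain m where m: "inverse (real (Suc m)) < dist v w" using reals_Archimedean by blast
  have "(u, v, w) \<in> Cm m" using u vw m au_iff[of v u] au_iff[of w u] by (auto simp: Cm_def field_simps)
  then show "u \<in> (\<Union>m. fst ` Cm m)" by force
next
  fix u assume "u \<in> (\<Union>m. fst ` Cm m)"
  then obtain m v w where z: "(u, v, w) \<in> Cm m" by auto
  then have vw: "u \<in> S" "v \<in> S" "w \<in> S" "au u v = Gh u" "au u w = Gh u"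
    using au_iff[of v u] au_iff[of w u] by (auto simp: Cm_def)
  have "v \<noteq> w" using z by (auto simp: Cm_def)
  then show "u \<in> S - Sm" using vw unfolding Sm_def by blast
qed

lemma nonsmooth_borel: "S - Sm \<in> sets borel"
proof -
  have "closed (fst ` Cm m)" for m
    by (intro compact_imp_closed compact_continuous_image Cm_compact continuous_intros)
  then show ?thesis unfolding nonsmooth_eq by auto
qed

lemma Sm_borel: "Sm \<in> sets borel"
proof -
  have "Sm = S - (S - Sm)" by (auto simp: Sm_def)
  then show ?thesis using nonsmooth_borel by (metis borel_closed closed_sphere sets.Diff)
qed

end

context setting
begin

lemma gh_subgrad: "v \<in> S \<Longrightarrow> z \<bullet> v / h v \<le> Gh z"
  unfolding Gh_def by (rule gauge_max(2)[OF cM.h_cont cM.h_pos])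

lemma gh_at:
  assumes u: "u \<in> S" and v: "v \<in> S" "au u v = Gh u" and l: "l > 0"
  shows "Gh (l *\<^sub>R u) = (l *\<^sub>R u) \<bullet> v / h v"
proof (rule antisym)
  obtain v' where v': "v' \<in> S" "Gh (l *\<^sub>R u) = (l *\<^sub>R u) \<bullet> v' / h v'"
    using gauge_max(1)[OF cM.h_cont cM.h_pos] unfolding Gh_def by blast
  have "(l *\<^sub>R u) \<bullet> v' / h v' = l * au u v'" by (simp add: au_def)
  also have "\<dots> \<le> l * Gh u" using au_le[OF v'(1)] l by simp
  also have "\<dots> = (l *\<^sub>R u) \<bullet> v / h v" by (simp add: v(2)[symmetric] au_def)
  finally show "Gh (l *\<^sub>R u) \<le> (l *\<^sub>R u) \<bullet> v / h v" using v' by simp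
qed (rule gh_subgrad[OF v(1)])

definition Pset :: "'a \<Rightarrow> real \<Rightarrow> real \<Rightarrow> 'a set" where
  "Pset b a c = {x. (\<forall>s\<ge>0. Gh x + c * s \<le> Gh (x + s *\<^sub>R b)) \<and> (\<forall>s\<le>0. Gh x + a * s \<le> Gh (x + s *\<^sub>R b))}"

lemma cone_in:
  assumes x: "x \<noteq> 0" and u: "x /\<^sub>R norm x \<in> S - Sm"
  shows "\<exists>b\<in>Basis. \<exists>a\<in>\<rat>. \<exists>c\<in>\<rat>. a < c \<and> x \<in> Pset b a c"
proof -
  define u where "u = x /\<^sub>R norm x"
  have uS: "u \<in> S" and uSm: "u \<notin> Sm" using u by (auto simp: u_def)
  obtain v w where vw: "v \<in> S" "w \<in> S" "au u v = Gh u" "au u w = Gh u" "v \<noteq> w"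
    using uS uSm unfolding Sm_def by blast
  have xu: "x = norm x *\<^sub>R u" using x by (simp add: u_def)
  have nx: "norm x > 0" using x by simp
  define yv where "yv = (1 / h v) *\<^sub>R v"
  define yw where "yw = (1 / h w) *\<^sub>R w"
  have hv: "h v > 0" "h w > 0" using cM.h_pos vw by auto
  have sgv: "Gh z \<ge> z \<bullet> yv" for z using gh_subgrad[OF vw(1), of z] by (simp add: yv_def)
  have sgw: "Gh z \<ge> z \<bullet> yw" for z using gh_subgrad[OF vw(2), of z] by (simp add: yw_def)
  have eqv: "Gh x = x \<bullet> yv" using gh_at[OF uS vw(1) vw(3) nx] xu by (simp add: yv_def)
  have eqw: "Gh x = x \<bullet> yw" using gh_at[OF uS vw(2) vw(4) nx] xu by (simp add: yw_def)
  have "yv \<noteq> yw"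
  proof
    assume e: "yv = yw"
    then have "norm yv = norm yw" by simp
    then have "1 / h v = 1 / h w" using vw hv by (simp add: yv_def yw_def)
    then have "h v = h w" by simp
    then show False using e vw(5) hv by (simp add: yv_def yw_def)
  qed
  then obtain b where b: "b \<in> Basis" "yv \<bullet> b \<noteq> yw \<bullet> b" by (meson euclidean_eqI)
  define lo where "lo = min (b \<bullet> yv) (b \<bullet> yw)"
  define hi where "hi = max (b \<bullet> yv) (b \<bullet> yw)"
  have lohi: "lo < hi" using b by (auto simp: lo_def hi_def inner_commute)
  obtain a where a: "a \<in> \<rat>" "lo < a" "a < hi" using Rats_dense_in_real[OF lohi] by blast
  obtain c where c: "c \<in> \<rat>" "a < c" "c < hi" using Rats_dense_in_real[OF a(3)] by blast
  have step: "Gh (x + s *\<^sub>R b) \<ge> Gh x + s * (b \<bullet> y)" if "y = yv \<or> y = yw" for s y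
    using that sgv[of "x + s *\<^sub>R b"] sgw[of "x + s *\<^sub>R b"] eqv eqw by (auto simp: inner_add_left)
  have "x \<in> Pset b a c"
    unfolding Pset_def
  proof (intro CollectI conjI allI impI)
    fix s :: real assume s: "s \<ge> 0"
    have "s * c \<le> s * hi" using s c by (intro mult_left_mono) auto
    moreover have "\<exists>y. (y = yv \<or> y = yw) \<and> b \<bullet> y = hi" by (auto simp: hi_def max_def)
    ultimately show "Gh x + c * s \<le> Gh (x + s *\<^sub>R b)" using step by (metis add_left_mono mult.commute order_trans)
  next
    fix s :: real assume s: "s \<le> 0"
    have "s * a \<le> s * lo" using s a by (intro mult_left_mono_neg) auto
    moreover have "\<exists>y. (y = yv \<or> y = yw) \<and> b \<bullet> y = lo" by (auto simp: lo_def min_def)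
    ultimately show "Gh x + a * s \<le> Gh (x + s *\<^sub>R b)" using step by (metis add_left_mono mult.commute order_trans)
  qed
  then show ?thesis using b a c by blast
qed

lemma cone_null: "(\<lambda>x::'a. x /\<^sub>R norm x) -` (S - Sm) \<inter> (ball 0 1 - {0}) \<in> null_sets lborel"
proof -
  define I where "I = {(b, a::real, c::real). b \<in> (Basis::'a set) \<and> a \<in> \<rat> \<and> c \<in> \<rat> \<and> a < c}"
  have cI: "countable I"
  proof (rule countable_subset)
    show "I \<subseteq> Basis \<times> (\<rat> \<times> \<rat>)" by (auto simp: I_def)
    show "countable ((Basis::'a set) \<times> (\<rat> \<times> \<rat>))"
      by (intro countable_SIGMA countable_finite finite_Basis countable_rat)
  qed
  define Nn where "Nn = (\<Union>i\<in>I. Pset (fst i) (fst (snd i)) (snd (snd i)) \<inter> cball 0 1)"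
  have Nnull: "Nn \<in> null_sets lborel"
    unfolding Nn_def
  proof (rule null_sets_UN'[OF cI])
    fix i assume "i \<in> I"
    then obtain b a c where i: "i = (b, a, c)" "b \<in> Basis" "a < c" by (auto simp: I_def)
    show "Pset (fst i) (fst (snd i)) (snd (snd i)) \<inter> cball 0 1 \<in> null_sets lborel"
      unfolding i Pset_def by (simp add: line_null[OF Gh_cont i(3)] i(2))
  qed
  have "(\<lambda>x::'a. x /\<^sub>R norm x) -` (S - Sm) \<inter> (ball 0 1 - {0}) \<subseteq> Nn"
  proof
    fix x assume x: "x \<in> (\<lambda>x::'a. x /\<^sub>R norm x) -` (S - Sm) \<inter> (ball 0 1 - {0})"
    then obtain b a c where "b \<in> Basis" "a \<in> \<rat>" "c \<in> \<rat>" "a < c" "x \<in> Pset b a c"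
      using cone_in by blast
    moreover have "x \<in> cball 0 1" using x by auto
    ultimately show "x \<in> Nn" unfolding Nn_def I_def by force
  qed
  moreover have "(\<lambda>x::'a. x /\<^sub>R norm x) -` (S - Sm) \<inter> (ball 0 1 - {0}) \<in> sets lborel"
    using measurable_sets_borel[OF proj_meas nonsmooth_borel] by simp
  ultimately show ?thesis using null_sets_subset[OF Nnull] by blast
qed

lemma nonsmooth_null: "S - Sm \<in> null_sets (sphere_measure :: 'a measure)"
proof -
  have s: "S - Sm \<in> sets (sphere_measure :: 'a measure)"
    using nonsmooth_borel by (simp add: sets_sm sets_restrict_space_iff)
  have "emeasure (sphere_measure :: 'a measure) (S - Sm) =
     ennreal (real DIM('a)) * emeasure lborel ((\<lambda>x::'a. x /\<^sub>R norm x) -` (S - Sm) \<inter> (ball 0 1 - {0}))"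
    by (rule emeasure_sm[OF nonsmooth_borel]) auto
  also have "\<dots> = 0" using null_setsD1[OF cone_null] by simp
  finally show ?thesis using s by (simp add: null_sets_def)
qed

lemma AE_Sm: "AE u in (sphere_measure :: 'a measure). u \<in> Sm"
  by (rule AE_I'[OF nonsmooth_null]) (auto simp: space_sm)

lemma alpha_cont: "continuous_on Sm alpha"
proof -
  have fim: "alpha \<in> Sm \<rightarrow> S" using alpha(1) by auto
  have eq: "(\<lambda>x. (x, alpha x)) ` Sm = (Sm \<times> S) \<inter> {z. fst z \<bullet> snd z = Gh (fst z) * h (snd z)}"
  proof (intro set_eqI iffI)
    fix z assume "z \<in> (\<lambda>x. (x, alpha x)) ` Sm"
    then obtain u where "u \<in> Sm" "z = (u, alpha u)" by auto
    then show "z \<in> (Sm \<times> S) \<inter> {z. fst z \<bullet> snd z = Gh (fst z) * h (snd z)}"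
      using alpha[of u] au_iff[of "alpha u" u] by auto
  next
    fix z assume z: "z \<in> (Sm \<times> S) \<inter> {z. fst z \<bullet> snd z = Gh (fst z) * h (snd z)}"
    obtain u v where uv: "z = (u, v)" by (cases z)
    have u: "u \<in> Sm" and v: "v \<in> S" and e: "au u v = Gh u" using z au_iff[of v u] by (auto simp: uv)
    have "v = alpha u" using u v e alpha[of u] unfolding Sm_def by blast
    then show "z \<in> (\<lambda>x. (x, alpha x)) ` Sm" using u uv by auto
  qed
  have c1: "continuous_on UNIV (\<lambda>z::'a \<times> 'a. Gh (fst z) * h (snd z))"
    by (intro continuous_intros continuous_on_compose2[OF Gh_cont] continuous_on_compose2[OF cM.h_cont]) auto
  have "closedin (top_of_set (Sm \<times> S)) ((\<lambda>x. (x, alpha x)) ` Sm)"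
    unfolding eq by (intro closedin_closed_Int closed_Collect_eq continuous_intros c1)
  then show ?thesis using continuous_closed_graph_eq[OF compact_sphere fim] by blast
qed

definition alpha' where "alpha' u = (if u \<in> Sm then alpha u else alpha 0)"

lemma alpha'_S: "alpha' u \<in> S" using alpha(1) by (simp add: alpha'_def)

lemma alpha'_meas: "alpha' \<in> measurable (sphere_measure :: 'a measure) (restrict_space borel S)"
proof -
  have "alpha' \<in> borel_measurable borel"
    unfolding alpha'_def[abs_def] by (rule borel_measurable_continuous_on_if[OF Sm_borel alpha_cont continuous_on_const])
  then have "alpha' \<in> measurable (restrict_space borel S) (restrict_space borel S)"
    by (intro measurable_restrict_space2 measurable_restrict_space1) (use alpha'_S in auto)
  then show ?thesis by (simp add: measurable_cong_sets[OF sets_sm refl])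
qed

end

context setting
begin

definition wQ :: "'a set \<Rightarrow> real \<Rightarrow> real \<Rightarrow> 'a \<Rightarrow> real" where
  "wQ Q q j u = radial_fun Q u powr (real DIM('a) - q - j)"

definition wc :: "'a set \<Rightarrow> real \<Rightarrow> real \<Rightarrow> 'a \<Rightarrow> real" where
  "wc Q q j u = (1 / real DIM('a)) * (radial_fun M u powr q * radial_fun Q u powr (real DIM('a) - q - j))"

lemma wQ_cont: "star_body_o Q \<Longrightarrow> continuous_on S (wQ Q q j)"
proof -
  assume Q: "star_body_o Q"
  have c: "continuous_on S (radial_fun Q)"
    using Q by (auto simp: star_body_o_def intro: continuous_on_subset)
  have pos: "\<forall>u\<in>S. radial_fun Q u > 0"
  proof
    fix u :: 'a assume "u \<in> S"
    then have "u \<noteq> 0" by auto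
    then show "radial_fun Q u > 0" using Q by (simp add: star_body_o_def)
  qed
  show ?thesis unfolding wQ_def[abs_def]
    by (intro continuous_on_powr c continuous_on_const) (use pos in auto)
qed

lemma I0_cont: "continuous_on S (\<lambda>u. radial_fun M u powr q)"
proof -
  have "continuous_on S (\<lambda>u. (1 / Gh u) powr q)"
    by (intro continuous_on_powr continuous_intros Gh_cont) (auto dest: Gh_pos)
  then show ?thesis by (rule continuous_on_eq) (simp add: rhoM)
qed

lemma It_cont: "\<bar>t\<bar> \<le> t0 \<Longrightarrow> continuous_on S (\<lambda>u. radial_fun (Lp_comb p M t N) u powr q)"
proof -
  assume t: "\<bar>t\<bar> \<le> t0"
  have rp: "r * exp (- (B1 * t0)) > 0" using cM.r by simp
  have gc: "continuous_on S (gaugef (ft t))"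
    by (rule gauge_continuous[OF ft_cont[OF t] ft_lower[OF t] rp])
  have gp: "\<And>u. u \<in> S \<Longrightarrow> gaugef (ft t) u > 0"
    using gauge_pos(2)[OF ft_cont[OF t] ft_pos[OF t]] .
  have "continuous_on S (\<lambda>u. (1 / gaugef (ft t) u) powr q)"
    by (intro continuous_on_powr continuous_intros gc) (auto dest: gp)
  then show ?thesis by (rule continuous_on_eq) (simp add: rho_t[OF t])
qed

lemma wc_cont: "star_body_o Q \<Longrightarrow> continuous_on S (wc Q q j)"
proof -
  assume Q: "star_body_o Q"
  have "continuous_on S (\<lambda>u. (1 / real DIM('a)) * (radial_fun M u powr q * wQ Q q j u))"
    by (intro continuous_intros I0_cont wQ_cont Q)
  then show ?thesis by (simp add: wc_def[abs_def] wQ_def)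
qed

lemma wc_nonneg: "wc Q q j u \<ge> 0" by (simp add: wc_def)

lemma normal_iff:
  assumes u: "u \<in> S" and v: "v \<in> S"
  shows "(radial_fun M u *\<^sub>R u) \<bullet> v = h v \<longleftrightarrow> au u v = Gh u"
proof -
  have G: "Gh u > 0" using Gh_pos[OF u] .
  have "(radial_fun M u *\<^sub>R u) \<bullet> v = (u \<bullet> v) / Gh u" using rhoM[OF u] by simp
  moreover have "(u \<bullet> v) / Gh u = h v \<longleftrightarrow> u \<bullet> v = Gh u * h v" using G by (auto simp: field_simps)
  ultimately show ?thesis using au_iff[OF v, of u] by simp
qed

lemma R_iff:
  assumes u: "u \<in> Sm" and \<eta>: "\<eta> \<subseteq> S"
  shows "u \<in> reverse_radial_gauss M \<eta> \<longleftrightarrow> alpha' u \<in> \<eta>"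
proof -
  have uS: "u \<in> S" using u by (simp add: Sm_def)
  have e: "\<And>v. v \<in> \<eta> \<Longrightarrow> ((radial_fun M u *\<^sub>R u) \<bullet> v = h v) = (au u v = Gh u)"
    using normal_iff[OF uS] \<eta> by blast
  have "u \<in> reverse_radial_gauss M \<eta> \<longleftrightarrow> (\<exists>v\<in>\<eta>. (radial_fun M u *\<^sub>R u) \<bullet> v = h v)"
    using uS unfolding reverse_radial_gauss_def by blast
  also have "\<dots> \<longleftrightarrow> (\<exists>v\<in>\<eta>. au u v = Gh u)" using e by blast
  also have "\<dots> \<longleftrightarrow> alpha u \<in> \<eta>"
  proof
    assume "\<exists>v\<in>\<eta>. au u v = Gh u"
    then obtain v where v: "v \<in> \<eta>" "au u v = Gh u" by blast
    then have "v = alpha u" using u alpha[of u] \<eta> unfolding Sm_def by blast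
    then show "alpha u \<in> \<eta>" using v by simp
  next
    assume "alpha u \<in> \<eta>" then show "\<exists>v\<in>\<eta>. au u v = Gh u" using alpha(2) by blast
  qed
  finally show ?thesis using u by (simp add: alpha'_def)
qed

lemma curv_eq:
  assumes Q: "star_body_o Q"
  shows "dual_mixed_curv q j M Q =
    distr (density sphere_measure (\<lambda>u. ennreal (wc Q q j u))) (restrict_space borel S) alpha'"
    (is "_ = ?D")
proof -
  have wm: "(\<lambda>u. ennreal (wc Q q j u)) \<in> borel_measurable (sphere_measure :: 'a measure)"
    using meas_sm[OF wc_cont[OF Q]] by simp
  have am: "alpha' \<in> measurable (density sphere_measure (\<lambda>u. ennreal (wc Q q j u))) (restrict_space borel S)"
    using alpha'_meas by (simp add: measurable_cong_sets[OF sets_density refl])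
  have sD: "sets ?D = sets (restrict_space borel S)" by simp
  have spD: "space ?D = S" by (simp add: space_restrict_space)
  have "?D = measure_of S (sets (restrict_space borel S)) (emeasure ?D)"
    using measure_of_of_measure[of ?D] by (simp add: spD)
  also have "\<dots> = dual_mixed_curv q j M Q"
    unfolding dual_mixed_curv_def
  proof (rule measure_of_eq)
    show "sets (restrict_space borel S) \<subseteq> Pow S"
      by (auto simp: sets_restrict_space)
    fix a assume "a \<in> sigma_sets S (sets (restrict_space borel S))"
    then have a: "a \<in> sets (restrict_space borel S)"
      using sets.sigma_sets_eq[of "restrict_space borel S"] by (simp add: space_restrict_space)
    then have aS: "a \<subseteq> S" using sets.sets_into_space by (fastforce simp: space_restrict_space)
    have pre: "alpha' -` a \<inter> S \<in> sets (sphere_measure :: 'a measure)"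
      using measurable_sets[OF alpha'_meas a] by (simp add: space_sm)
    have "emeasure ?D a = emeasure (density sphere_measure (\<lambda>u. ennreal (wc Q q j u))) (alpha' -` a \<inter> S)"
      by (subst emeasure_distr[OF am]) (auto simp: a space_sm)
    also have "\<dots> = (\<integral>\<^sup>+ u. ennreal (wc Q q j u) * indicator (alpha' -` a \<inter> S) u \<partial>sphere_measure)"
      by (rule emeasure_density[OF wm pre])
    also have "\<dots> = (\<integral>\<^sup>+ u. indicator (reverse_radial_gauss M a) u *
           ennreal ((1 / real DIM('a)) * (radial_fun M u powr q * radial_fun Q u powr (real DIM('a) - q - j)))
         \<partial>(sphere_measure :: 'a measure))"
    proof (rule nn_integral_cong_AE)
      show "AE u in sphere_measure. ennreal (wc Q q j u) * indicator (alpha' -` a \<inter> S) u =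
          indicator (reverse_radial_gauss M a) u *
           ennreal ((1 / real DIM('a)) * (radial_fun M u powr q * radial_fun Q u powr (real DIM('a) - q - j)))"
        using AE_Sm
      proof eventually_elim
        case (elim u)
        have uS: "u \<in> S" using elim by (simp add: Sm_def)
        have "indicator (alpha' -` a \<inter> S) u = (indicator (reverse_radial_gauss M a) u :: ennreal)"
          using R_iff[OF elim aS] uS by (simp add: indicator_def)
        then show ?case by (simp add: wc_def mult.commute)
      qed
    qed
    finally show "emeasure ?D a = (\<integral>\<^sup>+ u. indicator (reverse_radial_gauss M a) u *
           ennreal ((1 / real DIM('a)) * (radial_fun M u powr q * radial_fun Q u powr (real DIM('a) - q - j)))
         \<partial>(sphere_measure :: 'a measure))" .
  qed
  finally show ?thesis by simp
qed

end

lemma integrable_sm: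
  fixes f :: "'a::euclidean_space \<Rightarrow> real"
  assumes "continuous_on (sphere 0 1) f"
  shows "integrable (sphere_measure :: 'a measure) f"
proof -
  have "bounded (f ` sphere 0 1)" by (intro compact_imp_bounded compact_continuous_image assms compact_sphere)
  then obtain B where B: "\<forall>x\<in>f ` sphere 0 1. norm x \<le> B" unfolding bounded_iff by blast
  show ?thesis
  proof (rule finite_measure.integrable_const_bound[OF finite_sm, where B=B])
    show "AE x in sphere_measure. norm (f x) \<le> B" using B by (auto simp: space_sm)
    show "f \<in> borel_measurable sphere_measure" by (rule meas_sm[OF assms])
  qed
qed

context setting
begin

lemma kf_meas: "kf \<in> borel_measurable (restrict_space borel S)"
  by (rule borel_measurable_continuous_on_restrict[OF kf_cont])

lemma rhs_eq:
  assumes Q: "star_body_o Q"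
  shows "(\<integral>v. hN v powr p \<partial>(pq_dual_mixed_curv p q j M Q)) =
         (\<integral>u. wc Q q j u * kf (alpha' u) \<partial>(sphere_measure :: 'a measure))"
proof -
  define C where "C = dual_mixed_curv q j M Q"
  have Ceq: "C = distr (density sphere_measure (\<lambda>u. ennreal (wc Q q j u))) (restrict_space borel S) alpha'"
    unfolding C_def by (rule curv_eq[OF Q])
  have sC: "sets C = sets (restrict_space borel S)" by (simp add: Ceq)
  have spC: "space C = S" by (simp add: Ceq space_restrict_space)
  have c1: "continuous_on S (\<lambda>v. hN v powr p)"
    by (intro continuous_on_powr cN.h_cont continuous_on_const) (auto dest: cN.h_pos)
  have c2: "continuous_on S (\<lambda>v. h v powr (- p))"
    by (intro continuous_on_powr cM.h_cont continuous_on_const) (auto dest: cM.h_pos)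
  have m1: "(\<lambda>v. hN v powr p) \<in> borel_measurable C"
    using borel_measurable_continuous_on_restrict[OF c1] by (simp add: measurable_cong_sets[OF sC refl])
  have m2: "(\<lambda>v. h v powr (- p)) \<in> borel_measurable C"
    using borel_measurable_continuous_on_restrict[OF c2] by (simp add: measurable_cong_sets[OF sC refl])
  have "(\<integral>v. hN v powr p \<partial>(pq_dual_mixed_curv p q j M Q)) = (\<integral>v. h v powr (- p) *\<^sub>R hN v powr p \<partial>C)"
    unfolding pq_dual_mixed_curv_def C_def[symmetric] by (rule integral_density[OF m1 m2]) simp
  also have "\<dots> = (\<integral>v. kf v \<partial>C)"
  proof (rule Bochner_Integration.integral_cong[OF refl])
    fix v assume "v \<in> space C"
    then have v: "v \<in> S" using spC by simp
    show "h v powr (- p) *\<^sub>R hN v powr p = kf v"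
      using cM.h_pos[OF v] by (simp add: kf_def powr_minus_divide)
  qed
  also have "\<dots> = (\<integral>u. kf (alpha' u) \<partial>(density sphere_measure (\<lambda>u. ennreal (wc Q q j u))))"
    unfolding Ceq
    by (rule integral_distr[OF _ kf_meas]) (simp add: measurable_cong_sets[OF sets_density refl] alpha'_meas)
  also have "\<dots> = (\<integral>u. wc Q q j u *\<^sub>R kf (alpha' u) \<partial>(sphere_measure :: 'a measure))"
  proof (rule integral_density)
    show "(\<lambda>u. kf (alpha' u)) \<in> borel_measurable sphere_measure"
      by (rule measurable_compose[OF alpha'_meas kf_meas])
    show "wc Q q j \<in> borel_measurable sphere_measure" by (rule meas_sm[OF wc_cont[OF Q]])
    show "AE x in sphere_measure. 0 \<le> wc Q q j x" by (simp add: wc_nonneg)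
  qed
  finally show ?thesis by simp
qed

lemma lhs_lim:
  assumes Q: "star_body_o Q"
  shows "((\<lambda>t. (dual_mixed_quermass q j (Lp_comb p M t N) Q - dual_mixed_quermass q j M Q) / t)
     \<longlongrightarrow> (1 / real DIM('a)) * (\<integral>u. (q / p) * kf (alpha' u) * radial_fun M u powr q * wQ Q q j u
        \<partial>(sphere_measure :: 'a measure))) (at 0)"
proof -
  define I0 where "I0 u = radial_fun M u powr q" for u
  define It where "It t u = radial_fun (Lp_comb p M t N) u powr q" for t u
  define s where "s t u = ((It t u - I0 u) / t) * wQ Q q j u" for t u
  define f where "f u = (q / p) * kf (alpha' u) * I0 u * wQ Q q j u" for u
  have c0: "continuous_on S (\<lambda>u. I0 u * wQ Q q j u)"
    unfolding I0_def by (intro continuous_intros I0_cont wQ_cont Q)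
  have "bounded ((\<lambda>u. I0 u * wQ Q q j u) ` S)"
    by (intro compact_imp_bounded compact_continuous_image c0 compact_sphere)
  then obtain C0 where C0': "\<forall>x\<in>(\<lambda>u. I0 u * wQ Q q j u) ` S. norm x \<le> C0"
    unfolding bounded_iff by blast
  have C0: "\<And>u. u \<in> S \<Longrightarrow> \<bar>I0 u * wQ Q q j u\<bar> \<le> C0" using C0' by auto
  define K1 where "K1 = \<bar>q\<bar> * B1 * exp (\<bar>q\<bar> * B1 * t0)"
  have K1: "K1 \<ge> 0" using K p by (simp add: K1_def B1_def)
  have wQ0: "wQ Q q j u \<ge> 0" for u by (simp add: wQ_def)
  have I00: "I0 u \<ge> 0" for u by (simp add: I0_def)
  have ev: "\<forall>\<^sub>F t in at (0::real). \<bar>t\<bar> \<le> t0 \<and> t \<noteq> 0"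
    using t0 by (auto simp: eventually_at dist_real_def intro!: exI[of _ t0])
  have fm: "f \<in> borel_measurable (sphere_measure :: 'a measure)"
  proof -
    have "(\<lambda>u. kf (alpha' u)) \<in> borel_measurable sphere_measure"
      by (rule measurable_compose[OF alpha'_meas kf_meas])
    moreover have "I0 \<in> borel_measurable sphere_measure" unfolding I0_def[abs_def] by (rule meas_sm[OF I0_cont])
    moreover have "wQ Q q j \<in> borel_measurable sphere_measure" by (rule meas_sm[OF wQ_cont[OF Q]])
    ultimately show ?thesis unfolding f_def[abs_def] by measurable
  qed
  have wint: "integrable (sphere_measure :: 'a measure) (\<lambda>u. K1 * C0)"
    by (rule integrable_sm) (intro continuous_intros)
  have lim: "((\<lambda>t. integral\<^sup>L sphere_measure (s t)) \<longlongrightarrow> integral\<^sup>L (sphere_measure :: 'a measure) f) (at 0)"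
  proof (rule dct_at0[OF fm wint])
    show "\<forall>\<^sub>F t in at 0. s t \<in> borel_measurable sphere_measure \<and> (AE x in sphere_measure. \<bar>s t x\<bar> \<le> K1 * C0)"
      using ev
    proof eventually_elim
      case (elim t)
      then have t: "\<bar>t\<bar> \<le> t0" "t \<noteq> 0" by auto
      have cIt: "continuous_on S (It t)" using It_cont[OF t(1)] by (simp add: It_def[abs_def])
      have cI0: "continuous_on S I0" using I0_cont by (simp add: I0_def[abs_def])
      have "continuous_on S (s t)"
        unfolding s_def[abs_def]
        by (intro continuous_on_mult continuous_on_divide continuous_on_diff continuous_on_const cIt cI0 wQ_cont[OF Q])
           (use t in auto)
      then have "s t \<in> borel_measurable sphere_measure" by (rule meas_sm)
      moreover have "\<bar>s t u\<bar> \<le> K1 * C0" if u: "u \<in> S" for u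
      proof -
        have "\<bar>s t u\<bar> = \<bar>(It t u - I0 u) / t\<bar> * wQ Q q j u" by (simp add: s_def abs_mult wQ0)
        also have "\<dots> \<le> (K1 * I0 u) * wQ Q q j u"
          using quot_bound[OF t u] wQ0 unfolding It_def I0_def K1_def by (intro mult_right_mono) auto
        also have "\<dots> = K1 * (I0 u * wQ Q q j u)" by simp
        also have "\<dots> \<le> K1 * C0" using C0[OF u] K1 I00 wQ0 by (intro mult_left_mono) auto
        finally show ?thesis .
      qed
      ultimately show ?case by (auto simp: space_sm)
    qed
    show "AE x in sphere_measure. ((\<lambda>t. s t x) \<longlongrightarrow> f x) (at 0)"
      using AE_Sm
    proof eventually_elim
      case (elim u)
      have "((\<lambda>t. ((It t u - I0 u) / t) * wQ Q q j u) \<longlongrightarrow> ((q / p) * kf (alpha u) * I0 u) * wQ Q q j u) (at 0)"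
        using quot_lim[OF elim] unfolding It_def I0_def by (intro tendsto_mult_right)
      then show ?case using elim by (simp add: s_def f_def alpha'_def)
    qed
  qed
  then have lim2: "((\<lambda>t. (1 / real DIM('a)) * integral\<^sup>L sphere_measure (s t)) \<longlongrightarrow>
      (1 / real DIM('a)) * integral\<^sup>L (sphere_measure :: 'a measure) f) (at 0)"
    by (intro tendsto_intros)
  have ev2: "\<forall>\<^sub>F t in at 0. (1 / real DIM('a)) * integral\<^sup>L sphere_measure (s t) =
      (dual_mixed_quermass q j (Lp_comb p M t N) Q - dual_mixed_quermass q j M Q) / t"
    using ev
  proof eventually_elim
    case (elim t)
    then have t: "\<bar>t\<bar> \<le> t0" "t \<noteq> 0" by auto
    have i1: "integrable (sphere_measure :: 'a measure) (\<lambda>u. It t u * wQ Q q j u)"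
      by (rule integrable_sm) (unfold It_def, intro continuous_intros It_cont[OF t(1)] wQ_cont Q)
    have i2: "integrable (sphere_measure :: 'a measure) (\<lambda>u. I0 u * wQ Q q j u)"
      by (rule integrable_sm[OF c0])
    have "(dual_mixed_quermass q j (Lp_comb p M t N) Q - dual_mixed_quermass q j M Q) / t =
        (1 / real DIM('a)) * ((integral\<^sup>L sphere_measure (\<lambda>u. It t u * wQ Q q j u)
            - integral\<^sup>L sphere_measure (\<lambda>u. I0 u * wQ Q q j u)) / t)"
      unfolding dual_mixed_quermass_def It_def I0_def wQ_def by (simp add: algebra_simps)
    also have "\<dots> = (1 / real DIM('a)) * integral\<^sup>L sphere_measure (\<lambda>u. (It t u * wQ Q q j u - I0 u * wQ Q q j u) / t)"
      using i1 i2 by simp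
    also have "\<dots> = (1 / real DIM('a)) * integral\<^sup>L sphere_measure (s t)"
      unfolding s_def by (simp add: algebra_simps diff_divide_distrib)
    finally show ?case by simp
  qed
  have "((\<lambda>t. (dual_mixed_quermass q j (Lp_comb p M t N) Q - dual_mixed_quermass q j M Q) / t)
     \<longlongrightarrow> (1 / real DIM('a)) * integral\<^sup>L (sphere_measure :: 'a measure) f) (at 0)"
    by (rule Lim_transform_eventually[OF lim2 ev2])
  then show ?thesis unfolding f_def I0_def by simp
qed

lemma main:
  assumes Q: "star_body_o Q"
  shows "((\<lambda>t. (dual_mixed_quermass q j (Lp_comb p M t N) Q - dual_mixed_quermass q j M Q) / t)
           \<longlongrightarrow> (q / p) * (\<integral>v. support_fun N v powr p \<partial>(pq_dual_mixed_curv p q j M Q))) (at 0)"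
proof -
  have EQ: "(1 / real DIM('a)) * (\<integral>u. (q / p) * kf (alpha' u) * radial_fun M u powr q * wQ Q q j u
        \<partial>(sphere_measure :: 'a measure)) =
     (q / p) * (\<integral>u. wc Q q j u * kf (alpha' u) \<partial>(sphere_measure :: 'a measure))"
  proof -
    have "(\<integral>u. (q / p) * kf (alpha' u) * radial_fun M u powr q * wQ Q q j u \<partial>(sphere_measure :: 'a measure))
       = (\<integral>u. (q / p * real DIM('a)) * (wc Q q j u * kf (alpha' u)) \<partial>(sphere_measure :: 'a measure))"
      by (rule Bochner_Integration.integral_cong[OF refl]) (simp add: wc_def wQ_def)
    also have "\<dots> = (q / p * real DIM('a)) * (\<integral>u. wc Q q j u * kf (alpha' u) \<partial>(sphere_measure :: 'a measure))"
      by (rule integral_mult_right_zero)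
    finally have e: "(\<integral>u. (q / p) * kf (alpha' u) * radial_fun M u powr q * wQ Q q j u \<partial>(sphere_measure :: 'a measure))
       = (q / p * real DIM('a)) * (\<integral>u. wc Q q j u * kf (alpha' u) \<partial>(sphere_measure :: 'a measure))" .
    have n: "real DIM('a) > 0" by simp
    show ?thesis unfolding e using n by (simp add: field_simps)
  qed
  have L: "((\<lambda>t. (dual_mixed_quermass q j (Lp_comb p M t N) Q - dual_mixed_quermass q j M Q) / t)
     \<longlongrightarrow> (1 / real DIM('a)) * (\<integral>u. (q / p) * kf (alpha' u) * radial_fun M u powr q * wQ Q q j u
        \<partial>(sphere_measure :: 'a measure))) (at 0)" by (rule lhs_lim[OF Q])
  show ?thesis unfolding rhs_eq[OF Q, of q j] using L[unfolded EQ] .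
qed

end

theorem theorem4p4:
  fixes p q j :: real and M N Q :: "'a::euclidean_space set"
  assumes "p \<noteq> 0" and "q \<noteq> 0" and "j \<noteq> real DIM('a)"
    and "convex_body_o M" and "convex_body_o N" and "star_body_o Q"
  shows "((\<lambda>t. (dual_mixed_quermass q j (Lp_comb p M t N) Q - dual_mixed_quermass q j M Q) / t)
           \<longlongrightarrow> (q / p) * (\<integral>v. support_fun N v powr p \<partial>(pq_dual_mixed_curv p q j M Q))) (at 0)"
proof -
  obtain r R where rR: "0 < r" "cball 0 r \<subseteq> M" "M \<subseteq> cball 0 R" using cb_bounds[OF assms(4)] by blast
  obtain rN RN where rRN: "0 < rN" "cball 0 rN \<subseteq> N" "N \<subseteq> cball 0 RN" using cb_bounds[OF assms(5)] by blast
  interpret setting M r R N rN RN p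
    by (unfold_locales) (use rR rRN assms(1,4,5) in auto)
  show ?thesis by (rule main[OF assms(6)])
qed

end
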